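(* Let $(G,t)$ be a problem instance. Let $P$ be an induced path in $G$ from $p_1$ to $p_9$ visiting $p_1,p_2,\dots,p_9$ in this order, and $Q$ an induced path from $q_1$ to $q_9$ visiting $q_1,\dots,q_9$ in this order, with $P$ and $Q$ vertex-disjoint and $p_iq_i\in E(G)$ for all $1\le i\le 9$. Suppose $\mathrm{tw}(G[V(P)\cup V(Q)])\le 2$ and every vertex of $V(P)\cup V(Q)$ having a neighbour outside $V(P)\cup V(Q)$ lies in $\{p_1,p_9,q_1,q_9\}$. Then $(G,t)$ has a solution if and only if $(G-p_5q_5,t)$ has a solution, where $G-p_5q_5$ denotes $G$ with the edge $p_5q_5$ deleted.
   Context: $\mathrm{tw}$ is treewidth. A solution for $(G,t)$ is $S\subseteq V(G)$ with $|S|\le t$ and $\mathrm{tw}(G-S)\le 2$. A path is induced if it is an induced subgraph of $G$. *)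

theory Defs
  imports Main
begin

definition simple_graph :: "'a set \<Rightarrow> 'a set set \<Rightarrow> bool" where
  "simple_graph V E \<longleftrightarrow> finite V \<and>
     (\<forall>e\<in>E. \<exists>u v. e = {u, v} \<and> u \<noteq> v \<and> u \<in> V \<and> v \<in> V)"

definition connected_on :: "'b set set \<Rightarrow> 'b set \<Rightarrow> bool" where
  "connected_on F S \<longleftrightarrow>
     (\<forall>x\<in>S. \<forall>y\<in>S. (\<lambda>a b. a \<in> S \<and> b \<in> S \<and> {a, b} \<in> F)\<^sup>*\<^sup>* x y)"

definition is_tree :: "'b set \<Rightarrow> 'b set set \<Rightarrow> bool" where
  "is_tree I F \<longleftrightarrow> simple_graph I F \<and> I \<noteq> {} \<and> connected_on F I \<and> card F + 1 = card I"

definition tree_decomposition ::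
  "'a set \<Rightarrow> 'a set set \<Rightarrow> 'b set \<Rightarrow> 'b set set \<Rightarrow> ('b \<Rightarrow> 'a set) \<Rightarrow> bool" where
  "tree_decomposition V E I F B \<longleftrightarrow>
     is_tree I F \<and>
     (\<forall>i\<in>I. B i \<subseteq> V) \<and>
     (\<forall>v\<in>V. \<exists>i\<in>I. v \<in> B i) \<and>
     (\<forall>e\<in>E. \<exists>i\<in>I. e \<subseteq> B i) \<and>
     (\<forall>v\<in>V. connected_on F {i\<in>I. v \<in> B i})"

definition tw_le :: "'a set \<Rightarrow> 'a set set \<Rightarrow> nat \<Rightarrow> bool" where
  "tw_le V E k \<longleftrightarrow> (\<exists>(I :: nat set) F B. tree_decomposition V E I F B \<and>
                                           (\<forall>i\<in>I. card (B i) \<le> k + 1))"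

definition induced_edges :: "'a set set \<Rightarrow> 'a set \<Rightarrow> 'a set set" where
  "induced_edges E S = {e \<in> E. e \<subseteq> S}"

definition del_edges :: "'a set set \<Rightarrow> 'a set \<Rightarrow> 'a set set" where
  "del_edges E S = {e \<in> E. e \<inter> S = {}}"

definition is_solution :: "'a set \<Rightarrow> 'a set set \<Rightarrow> nat \<Rightarrow> 'a set \<Rightarrow> bool" where
  "is_solution V E t S \<longleftrightarrow> S \<subseteq> V \<and> card S \<le> t \<and> tw_le (V - S) (del_edges E S) 2"

definition has_solution :: "'a set \<Rightarrow> 'a set set \<Rightarrow> nat \<Rightarrow> bool" where
  "has_solution V E t \<longleftrightarrow> (\<exists>S. is_solution V E t S)"

definition induced_path :: "'a set \<Rightarrow> 'a set set \<Rightarrow> (nat \<Rightarrow> 'a) \<Rightarrow> nat \<Rightarrow> bool" where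
  "induced_path V E p n \<longleftrightarrow> inj_on p {1..n} \<and> p ` {1..n} \<subseteq> V \<and>
     (\<forall>i\<in>{1..n}. \<forall>j\<in>{1..n}. {p i, p j} \<in> E \<longleftrightarrow> (i = j + 1 \<or> j = i + 1))"

end

theory Submission
  imports Defs
begin


lemma rt_mono: "r\<^sup>*\<^sup>* x y \<Longrightarrow> (\<And>a b. r a b \<Longrightarrow> s a b) \<Longrightarrow> s\<^sup>*\<^sup>* x y"
  by (induction rule: rtranclp_induct) (auto intro: rtranclp.rtrancl_into_rtrancl)

lemma rt_sym:
  assumes "(\<lambda>a b. a \<in> S \<and> b \<in> S \<and> {a, b} \<in> F)\<^sup>*\<^sup>* x y"
  shows "(\<lambda>a b. a \<in> S \<and> b \<in> S \<and> {a, b} \<in> F)\<^sup>*\<^sup>* y x"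
  using assms
proof (induction rule: rtranclp_induct)
  case base then show ?case by simp
next
  case (step y z)
  have "(\<lambda>a b. a \<in> S \<and> b \<in> S \<and> {a, b} \<in> F) z y" using step(2) by (simp add: insert_commute)
  then show ?case using step(3) by (rule converse_rtranclp_into_rtranclp)
qed

lemma conn_mono: "connected_on F S \<Longrightarrow> F \<subseteq> F' \<Longrightarrow> connected_on F' S"
  unfolding connected_on_def by (blast intro: rt_mono)

lemma conn_single: "connected_on F {a}"
  unfolding connected_on_def by simp

lemma conn_Un:
  assumes A: "connected_on F A" and B: "connected_on F B" and "a \<in> A" "b \<in> B"
    and ab: "{a, b} \<in> F \<or> a = b"
  shows "connected_on F (A \<union> B)"
proof -
  let ?R = "\<lambda>a b. a \<in> A \<union> B \<and> b \<in> A \<union> B \<and> {a, b} \<in> F"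
  have AA: "?R\<^sup>*\<^sup>* x y" if "x \<in> A" "y \<in> A" for x y
    using A that unfolding connected_on_def by (blast intro: rt_mono)
  have BB: "?R\<^sup>*\<^sup>* x y" if "x \<in> B" "y \<in> B" for x y
    using B that unfolding connected_on_def by (blast intro: rt_mono)
  have ab': "?R\<^sup>*\<^sup>* a b"
    using ab \<open>a \<in> A\<close> \<open>b \<in> B\<close> by auto
  have AB: "?R\<^sup>*\<^sup>* x y" if "x \<in> A" "y \<in> B" for x y
    using AA[OF that(1) \<open>a \<in> A\<close>] ab' BB[OF \<open>b \<in> B\<close> that(2)] by (meson rtranclp_trans)
  show ?thesis
    unfolding connected_on_def
  proof (intro ballI)
    fix x y assume "x \<in> A \<union> B" "y \<in> A \<union> B"
    then show "?R\<^sup>*\<^sup>* x y"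
    proof (elim UnE)
      assume "x \<in> A" "y \<in> A" then show ?thesis by (rule AA)
    next
      assume "x \<in> A" "y \<in> B" then show ?thesis by (rule AB)
    next
      assume "x \<in> B" "y \<in> A"
      show ?thesis using rt_sym[OF AB[OF \<open>y \<in> A\<close> \<open>x \<in> B\<close>]] .
    next
      assume "x \<in> B" "y \<in> B" then show ?thesis by (rule BB)
    qed
  qed
qed

lemma conn_insert:
  assumes "connected_on F A" "a \<in> A" "{a, b} \<in> F"
  shows "connected_on F (insert b A)"
  using conn_Un[OF assms(1) conn_single[of F b] assms(2) _] assms(3) by simp

lemma conn_image:
  assumes "connected_on F S" "inj f"
  shows "connected_on ((`) f ` F) (f ` S)"
proof -
  have "(\<lambda>a b. a \<in> f ` S \<and> b \<in> f ` S \<and> {a, b} \<in> (`) f ` F)\<^sup>*\<^sup>* (f x) (f y)"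
    if "(\<lambda>a b. a \<in> S \<and> b \<in> S \<and> {a, b} \<in> F)\<^sup>*\<^sup>* x y" for x y
    using that
  proof (induction rule: rtranclp_induct)
    case base then show ?case by simp
  next
    case (step y z)
    then have "f ` {y, z} \<in> (`) f ` F" by blast
    then have "{f y, f z} \<in> (`) f ` F" by simp
    with step show ?case by (auto intro: rtranclp.rtrancl_into_rtrancl)
  qed
  then show ?thesis using assms(1) unfolding connected_on_def by blast
qed


lemma tree_fin: "is_tree I F \<Longrightarrow> finite I"
  unfolding is_tree_def simple_graph_def by blast

lemma tree_edge: "is_tree I F \<Longrightarrow> e \<in> F \<Longrightarrow> \<exists>u v. e = {u, v} \<and> u \<noteq> v \<and> u \<in> I \<and> v \<in> I"
  unfolding is_tree_def simple_graph_def by blast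

lemma tree_finF: assumes "is_tree I F" shows "finite F"
proof -
  have "F \<subseteq> Pow I" using tree_edge[OF assms] by blast
  then show ?thesis using tree_fin[OF assms] by (meson finite_Pow_iff finite_subset)
qed

lemma leaf_exists:
  assumes T: "is_tree I F" and c: "card I \<ge> 2"
  shows "\<exists>l j. l \<in> I \<and> j \<in> I \<and> l \<noteq> j \<and> {l, j} \<in> F \<and> (\<forall>e\<in>F. l \<in> e \<longrightarrow> e = {l, j})"
proof -
  have fin: "finite I" using tree_fin[OF T] .
  have finF: "finite F" using tree_finF[OF T] .
  have c2: "\<forall>e\<in>F. card {i \<in> I. i \<in> e} = 2"
  proof
    fix e assume "e \<in> F"
    then obtain u v where "e = {u, v}" "u \<noteq> v" "u \<in> I" "v \<in> I" using tree_edge[OF T] by blast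
    then have "{i \<in> I. i \<in> e} = {u, v}" by auto
    then show "card {i \<in> I. i \<in> e} = 2" using \<open>u \<noteq> v\<close> by simp
  qed
  have hs: "(\<Sum>i\<in>I. card {e \<in> F. i \<in> e}) = 2 * card F"
    using sum_multicount[OF fin finF c2] .
  have cF: "card F + 1 = card I" using T unfolding is_tree_def by blast
  have "\<exists>l\<in>I. card {e \<in> F. l \<in> e} < 2"
  proof (rule ccontr)
    assume "\<not> ?thesis"
    then have "\<forall>l\<in>I. 2 \<le> card {e \<in> F. l \<in> e}" by auto
    then have "(\<Sum>i\<in>I. (2::nat)) \<le> (\<Sum>i\<in>I. card {e \<in> F. i \<in> e})" by (intro sum_mono) auto
    then show False using hs cF by simp
  qed
  then obtain l where l: "l \<in> I" "card {e \<in> F. l \<in> e} < 2" by blast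
  obtain j0 where j0: "j0 \<in> I" "j0 \<noteq> l"
  proof -
    have "I \<noteq> {l}" using c by auto
    then show ?thesis using that l(1) by blast
  qed
  have "(\<lambda>a b. a \<in> I \<and> b \<in> I \<and> {a, b} \<in> F)\<^sup>*\<^sup>* l j0"
    using T l(1) j0(1) unfolding is_tree_def connected_on_def by blast
  then have "\<exists>z. {l, z} \<in> F"
    using j0(2) by (cases rule: converse_rtranclpE) auto
  then obtain z where z: "{l, z} \<in> F" by blast
  then have "{e \<in> F. l \<in> e} \<noteq> {}" by auto
  then have "card {e \<in> F. l \<in> e} > 0" using finF by (simp add: card_gt_0_iff)
  then have "card {e \<in> F. l \<in> e} = 1" using l(2) by linarith
  then obtain e0 where e0: "{e \<in> F. l \<in> e} = {e0}" using card_1_singletonE by blast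
  then have "e0 \<in> F" "l \<in> e0" by auto
  then obtain u v where uv: "e0 = {u, v}" "u \<noteq> v" "u \<in> I" "v \<in> I" using tree_edge[OF T] by blast
  have "\<exists>j. e0 = {l, j} \<and> j \<noteq> l \<and> j \<in> I"
    using uv \<open>l \<in> e0\<close> by (auto simp: insert_commute)
  then obtain j where j: "e0 = {l, j}" "j \<noteq> l" "j \<in> I" by blast
  show ?thesis
    apply (rule exI[of _ l], rule exI[of _ j])
    using l(1) j \<open>e0 \<in> F\<close> e0 by auto
qed

lemma leaf_walk:
  assumes lf: "\<forall>e\<in>F. l \<in> e \<longrightarrow> e = {l, j}" "l \<noteq> j"
    and w: "(\<lambda>a b. a \<in> T \<and> b \<in> T \<and> {a, b} \<in> F)\<^sup>*\<^sup>* x y" and x: "x \<noteq> l"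
  shows "(\<lambda>a b. a \<in> T - {l} \<and> b \<in> T - {l} \<and> {a, b} \<in> F - {{l, j}})\<^sup>*\<^sup>* x (if y = l then j else y)"
  using w
proof (induction rule: rtranclp_induct)
  case base then show ?case using x by simp
next
  case (step y z)
  let ?R = "\<lambda>a b. a \<in> T - {l} \<and> b \<in> T - {l} \<and> {a, b} \<in> F - {{l, j}}"
  show ?case
  proof (cases "z = l")
    case True
    then have "{y, l} = {l, j}" using step lf by (metis insertCI)
    then have "y = j" using lf(2) by (metis doubleton_eq_iff)
    then show ?thesis using step True lf(2) by simp
  next
    case False
    show ?thesis
    proof (cases "y = l")
      case True
      then have "{l, z} = {l, j}" using step lf by (metis insertCI)
      then have "z = j" using False by (metis doubleton_eq_iff)
      then show ?thesis using step True False by simp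
    next
      case yl: False
      have "{y, z} \<noteq> {l, j}" using yl False by (metis doubleton_eq_iff)
      then have "?R y z" using step yl False by auto
      then show ?thesis using step yl False by (auto intro: rtranclp.rtrancl_into_rtrancl)
    qed
  qed
qed

lemma leaf_conn_sub:
  assumes "connected_on F T" "\<forall>e\<in>F. l \<in> e \<longrightarrow> e = {l, j}" "l \<noteq> j"
  shows "connected_on (F - {{l, j}}) (T - {l})"
  unfolding connected_on_def
proof (intro ballI)
  fix x y assume "x \<in> T - {l}" "y \<in> T - {l}"
  then have "(\<lambda>a b. a \<in> T \<and> b \<in> T \<and> {a, b} \<in> F)\<^sup>*\<^sup>* x y" using assms(1) unfolding connected_on_def by blast
  from leaf_walk[OF assms(2,3) this] \<open>x \<in> T - {l}\<close> \<open>y \<in> T - {l}\<close>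
  show "(\<lambda>a b. a \<in> T - {l} \<and> b \<in> T - {l} \<and> {a, b} \<in> F - {{l, j}})\<^sup>*\<^sup>* x y" by simp
qed

lemma rt_end_in:
  assumes "(\<lambda>a b. a \<in> T \<and> b \<in> T \<and> R a b)\<^sup>*\<^sup>* x y" "x \<in> T"
  shows "y \<in> T"
  using assms by (induction rule: rtranclp_induct) auto

lemma leaf_conn_j:
  assumes "connected_on F T" "\<forall>e\<in>F. l \<in> e \<longrightarrow> e = {l, j}" "l \<noteq> j" "l \<in> T" "t \<in> T" "t \<noteq> l"
  shows "j \<in> T"
proof -
  have "(\<lambda>a b. a \<in> T \<and> b \<in> T \<and> {a, b} \<in> F)\<^sup>*\<^sup>* t l" using assms unfolding connected_on_def by blast
  from leaf_walk[OF assms(2,3) this assms(6)]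
  have "(\<lambda>a b. a \<in> T - {l} \<and> b \<in> T - {l} \<and> {a, b} \<in> F - {{l, j}})\<^sup>*\<^sup>* t j" by simp
  from rt_end_in[OF this] assms(5,6) show ?thesis by blast
qed

lemma leaf_remove_tree:
  assumes T: "is_tree I F" and lf: "l \<in> I" "j \<in> I" "l \<noteq> j" "{l, j} \<in> F" "\<forall>e\<in>F. l \<in> e \<longrightarrow> e = {l, j}"
  shows "is_tree (I - {l}) (F - {{l, j}})"
proof -
  have fin: "finite I" using tree_fin[OF T] .
  have finF: "finite F" using tree_finF[OF T] .
  have sg: "simple_graph (I - {l}) (F - {{l, j}})"
    unfolding simple_graph_def
  proof (intro conjI ballI)
    show "finite (I - {l})" using fin by simp
  next
    fix e assume e: "e \<in> F - {{l, j}}"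
    then obtain u v where "e = {u, v}" "u \<noteq> v" "u \<in> I" "v \<in> I" using tree_edge[OF T] by blast
    moreover have "l \<notin> e" using e lf(5) by blast
    ultimately show "\<exists>u v. e = {u, v} \<and> u \<noteq> v \<and> u \<in> I - {l} \<and> v \<in> I - {l}" by blast
  qed
  have cI: "card F + 1 = card I" using T unfolding is_tree_def by blast
  have "card F > 0" using lf(4) finF by (auto simp: card_gt_0_iff)
  then have "card (F - {{l, j}}) + 1 = card (I - {l})"
    using cI lf(1,4) fin finF by (simp add: card_Diff_singleton)
  moreover have "connected_on (F - {{l, j}}) (I - {l})"
    using leaf_conn_sub[OF _ lf(5) lf(3)] T unfolding is_tree_def by blast
  moreover have "I - {l} \<noteq> {}" using lf by blast
  ultimately show ?thesis using sg unfolding is_tree_def by blast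
qed

lemma helly:
  assumes "is_tree I F" "\<forall>k\<in>K. T k \<subseteq> I \<and> T k \<noteq> {} \<and> connected_on F (T k)"
    "\<forall>k\<in>K. \<forall>k'\<in>K. T k \<inter> T k' \<noteq> {}"
  shows "\<exists>i\<in>I. \<forall>k\<in>K. i \<in> T k"
  using assms
proof (induction "card I" arbitrary: I F T rule: less_induct)
  case less
  have fin: "finite I" using tree_fin[OF less.prems(1)] .
  have ne: "I \<noteq> {}" using less.prems(1) unfolding is_tree_def by blast
  show ?case
  proof (cases "card I \<ge> 2")
    case False
    have "card I > 0" using fin ne by (simp add: card_gt_0_iff)
    then have "card I = 1" using False by linarith
    then obtain i where I: "I = {i}" using card_1_singletonE by blast
    then show ?thesis using less.prems(2) by blast
  next
    case True
    obtain l j where lf: "l \<in> I" "j \<in> I" "l \<noteq> j" "{l, j} \<in> F" "\<forall>e\<in>F. l \<in> e \<longrightarrow> e = {l, j}"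
      using leaf_exists[OF less.prems(1) True] by blast
    show ?thesis
    proof (cases "\<exists>k\<in>K. T k = {l}")
      case True
      then obtain k where "k \<in> K" "T k = {l}" by blast
      have "\<forall>k'\<in>K. l \<in> T k'"
      proof
        fix k' assume "k' \<in> K"
        then have "T k \<inter> T k' \<noteq> {}" using less.prems(3) \<open>k \<in> K\<close> by blast
        then show "l \<in> T k'" using \<open>T k = {l}\<close> by auto
      qed
      then show ?thesis using lf(1) by blast
    next
      case False
      let ?T = "\<lambda>k. T k - {l}"
      have t1: "is_tree (I - {l}) (F - {{l, j}})" using leaf_remove_tree[OF less.prems(1) lf] .
      have t2: "\<forall>k\<in>K. ?T k \<subseteq> I - {l} \<and> ?T k \<noteq> {} \<and> connected_on (F - {{l, j}}) (?T k)"
        using less.prems(2) False leaf_conn_sub[OF _ lf(5) lf(3)] by blast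
      have t3: "\<forall>k\<in>K. \<forall>k'\<in>K. ?T k \<inter> ?T k' \<noteq> {}"
      proof (intro ballI)
        fix k k' assume kk: "k \<in> K" "k' \<in> K"
        show "?T k \<inter> ?T k' \<noteq> {}"
        proof (cases "T k \<inter> T k' \<subseteq> {l}")
          case False then show ?thesis by blast
        next
          case True
          then have "l \<in> T k" "l \<in> T k'" using less.prems(3) kk by blast+
          obtain t where "t \<in> T k" "t \<noteq> l" using False kk less.prems(2) by blast
          obtain t' where "t' \<in> T k'" "t' \<noteq> l" using False kk less.prems(2) by blast
          have "j \<in> T k" using leaf_conn_j[OF _ lf(5) lf(3) \<open>l \<in> T k\<close> \<open>t \<in> T k\<close> \<open>t \<noteq> l\<close>] less.prems(2) kk by blast
          moreover have "j \<in> T k'" using leaf_conn_j[OF _ lf(5) lf(3) \<open>l \<in> T k'\<close> \<open>t' \<in> T k'\<close> \<open>t' \<noteq> l\<close>] less.prems(2) kk by blast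
          ultimately show ?thesis using lf(3) by blast
        qed
      qed
      have "card (I - {l}) < card I" using fin lf(1) by (meson card_Diff1_less)
      from less.hyps[OF this t1 t2 t3] show ?thesis by blast
    qed
  qed
qed


lemma td_parts:
  assumes "tree_decomposition V E I F B"
  shows "is_tree I F" "\<And>i. i \<in> I \<Longrightarrow> B i \<subseteq> V" "\<And>v. v \<in> V \<Longrightarrow> \<exists>i\<in>I. v \<in> B i"
    "\<And>e. e \<in> E \<Longrightarrow> \<exists>i\<in>I. e \<subseteq> B i" "\<And>v. v \<in> V \<Longrightarrow> connected_on F {i \<in> I. v \<in> B i}"
  using assms unfolding tree_decomposition_def by blast+

lemma td_intro:
  assumes "is_tree I F" "\<And>i. i \<in> I \<Longrightarrow> B i \<subseteq> V" "\<And>v. v \<in> V \<Longrightarrow> \<exists>i\<in>I. v \<in> B i"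
    "\<And>e. e \<in> E \<Longrightarrow> \<exists>i\<in>I. e \<subseteq> B i" "\<And>v. v \<in> V \<Longrightarrow> connected_on F {i \<in> I. v \<in> B i}"
  shows "tree_decomposition V E I F B"
  using assms unfolding tree_decomposition_def by blast

lemma td_restrict:
  assumes td: "tree_decomposition V E I F B" and W: "W \<subseteq> V" and E': "\<forall>e\<in>E'. e \<in> E \<and> e \<subseteq> W"
  shows "tree_decomposition W E' I F (\<lambda>i. B i \<inter> W)"
proof (rule td_intro)
  show "is_tree I F" by (rule td_parts(1)[OF td])
next
  fix i assume "i \<in> I" then show "B i \<inter> W \<subseteq> W" by blast
next
  fix v assume "v \<in> W"
  then obtain i where "i \<in> I" "v \<in> B i" using td_parts(3)[OF td] W by blast
  then show "\<exists>i\<in>I. v \<in> B i \<inter> W" using \<open>v \<in> W\<close> by blast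
next
  fix e assume "e \<in> E'"
  then have "e \<in> E" "e \<subseteq> W" using E' by auto
  then obtain i where "i \<in> I" "e \<subseteq> B i" using td_parts(4)[OF td] by blast
  then show "\<exists>i\<in>I. e \<subseteq> B i \<inter> W" using \<open>e \<subseteq> W\<close> by blast
next
  fix v assume "v \<in> W"
  then have "connected_on F {i \<in> I. v \<in> B i}" using td_parts(5)[OF td] W by blast
  moreover have "{i \<in> I. v \<in> B i \<inter> W} = {i \<in> I. v \<in> B i}" using \<open>v \<in> W\<close> by blast
  ultimately show "connected_on F {i \<in> I. v \<in> B i \<inter> W}" by simp
qed

lemma tw_restrict:
  assumes "tw_le V E k" "finite V" "W \<subseteq> V" "\<forall>e\<in>E'. e \<in> E \<and> e \<subseteq> W"
  shows "tw_le W E' k"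
proof -
  obtain I :: "nat set" and F B where td: "tree_decomposition V E I F B" and w: "\<forall>i\<in>I. card (B i) \<le> k + 1"
    using assms(1) unfolding tw_le_def by blast
  have "\<forall>i\<in>I. card (B i \<inter> W) \<le> k + 1"
  proof
    fix i assume "i \<in> I"
    then have "B i \<subseteq> V" using td_parts(2)[OF td] by blast
    then have "finite (B i)" using assms(2) finite_subset by blast
    then have "card (B i \<inter> W) \<le> card (B i)" by (simp add: card_mono)
    then show "card (B i \<inter> W) \<le> k + 1" using w \<open>i \<in> I\<close> by force
  qed
  then show ?thesis using td_restrict[OF td assms(3,4)] unfolding tw_le_def by blast
qed

lemma td_relabel:
  assumes td: "tree_decomposition V E I F B" and f: "inj f"
  shows "tree_decomposition V E (f ` I) ((`) f ` F) (\<lambda>i. B (inv f i))"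
proof -
  have T: "is_tree I F" using td_parts(1)[OF td] .
  have T': "is_tree (f ` I) ((`) f ` F)"
    unfolding is_tree_def
  proof (intro conjI)
    show "simple_graph (f ` I) ((`) f ` F)"
      unfolding simple_graph_def
    proof (intro conjI ballI)
      show "finite (f ` I)" using tree_fin[OF T] by simp
    next
      fix e' assume "e' \<in> (`) f ` F"
      then obtain e where "e \<in> F" "e' = f ` e" by blast
      then obtain u v where "e = {u, v}" "u \<noteq> v" "u \<in> I" "v \<in> I" using tree_edge[OF T] by blast
      moreover have "f u \<noteq> f v" using f \<open>u \<noteq> v\<close> by (meson injD)
      ultimately show "\<exists>u v. e' = {u, v} \<and> u \<noteq> v \<and> u \<in> f ` I \<and> v \<in> f ` I"
        using \<open>e' = f ` e\<close> by (intro exI[of _ "f u"] exI[of _ "f v"]) auto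
    qed
  next
    show "f ` I \<noteq> {}" using T unfolding is_tree_def by blast
  next
    show "connected_on ((`) f ` F) (f ` I)" using conn_image[OF _ f] T unfolding is_tree_def by blast
  next
    have "inj_on ((`) f) F" using f by (meson inj_image_eq_iff inj_onI)
    then have "card ((`) f ` F) = card F" by (rule card_image)
    moreover have "card (f ` I) = card I" using f by (simp add: card_image inj_on_subset)
    ultimately show "card ((`) f ` F) + 1 = card (f ` I)" using T unfolding is_tree_def by simp
  qed
  have inv: "inv f (f i) = i" for i using f by simp
  have S: "{i' \<in> f ` I. v \<in> B (inv f i')} = f ` {i \<in> I. v \<in> B i}" for v
    using inv by auto
  show ?thesis
  proof (rule td_intro)
    show "is_tree (f ` I) ((`) f ` F)" by (rule T')
  next
    fix i' assume "i' \<in> f ` I"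
    then obtain i where "i \<in> I" "i' = f i" by blast
    then show "B (inv f i') \<subseteq> V" using td_parts(2)[OF td] inv by simp
  next
    fix v assume "v \<in> V"
    then obtain i where "i \<in> I" "v \<in> B i" using td_parts(3)[OF td] by blast
    then show "\<exists>i\<in>f ` I. v \<in> B (inv f i)" using inv by (intro bexI[of _ "f i"]) auto
  next
    fix e assume "e \<in> E"
    then obtain i where "i \<in> I" "e \<subseteq> B i" using td_parts(4)[OF td] by blast
    then show "\<exists>i\<in>f ` I. e \<subseteq> B (inv f i)" using inv by (intro bexI[of _ "f i"]) auto
  next
    fix v assume "v \<in> V"
    then have "connected_on F {i \<in> I. v \<in> B i}" using td_parts(5)[OF td] by blast
    then have "connected_on ((`) f ` F) (f ` {i \<in> I. v \<in> B i})" by (rule conn_image[OF _ f])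
    then show "connected_on ((`) f ` F) {i \<in> f ` I. v \<in> B (inv f i)}" unfolding S .
  qed
qed

lemma td_bag:
  assumes td: "tree_decomposition V E I F B" and "C \<subseteq> V" "C \<subseteq> {u, v}"
    "u \<in> C \<and> v \<in> C \<and> u \<noteq> v \<longrightarrow> {u, v} \<in> E"
  shows "\<exists>i\<in>I. C \<subseteq> B i"
proof -
  have ne: "I \<noteq> {}" using td_parts(1)[OF td] unfolding is_tree_def by blast
  have cov: "\<forall>w\<in>V. \<exists>i\<in>I. w \<in> B i" using td_parts(3)[OF td] by blast
  have ed: "\<forall>e\<in>E. \<exists>i\<in>I. e \<subseteq> B i" using td_parts(4)[OF td] by blast
  consider "C = {}" | "C = {u}" | "C = {v}" | "C = {u, v}" using assms(3) by blast
  then show ?thesis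
  proof cases
    case 1 then show ?thesis using ne by blast
  next
    case 2 then show ?thesis using cov assms(2) by blast
  next
    case 3 then show ?thesis using cov assms(2) by blast
  next
    case 4
    show ?thesis
    proof (cases "u = v")
      case True then show ?thesis using 4 cov assms(2) by auto
    next
      case False
      then have "{u, v} \<in> E" using 4 assms(4) by blast
      then obtain i where "i \<in> I" "{u, v} \<subseteq> B i" using ed by blast
      then show ?thesis using 4 by blast
    qed
  qed
qed


lemma tree_edge_sub: "is_tree I F \<Longrightarrow> e \<in> F \<Longrightarrow> e \<subseteq> I"
  using tree_edge by blast

lemma td_glue:
  assumes td1: "tree_decomposition V1 E1 I1 F1 B1" and td2: "tree_decomposition V2 E2 I2 F2 B2"
    and dis: "I1 \<inter> I2 = {}" and a: "a \<in> I1" and b: "b \<in> I2"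
    and Ca: "V1 \<inter> V2 \<subseteq> B1 a" and Cb: "V1 \<inter> V2 \<subseteq> B2 b"
  shows "tree_decomposition (V1 \<union> V2) (E1 \<union> E2) (I1 \<union> I2) (insert {a, b} (F1 \<union> F2))
           (\<lambda>i. if i \<in> I1 then B1 i else B2 i)"
proof -
  let ?F = "insert {a, b} (F1 \<union> F2)"
  let ?B = "\<lambda>i. if i \<in> I1 then B1 i else B2 i"
  have T1: "is_tree I1 F1" using td_parts(1)[OF td1] .
  have T2: "is_tree I2 F2" using td_parts(1)[OF td2] .
  have ab: "a \<noteq> b" using a b dis by blast
  have sg: "simple_graph (I1 \<union> I2) ?F"
    unfolding simple_graph_def
  proof (intro conjI ballI)
    show "finite (I1 \<union> I2)" using tree_fin[OF T1] tree_fin[OF T2] by simp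
  next
    fix e assume "e \<in> ?F"
    then consider "e = {a, b}" | "e \<in> F1" | "e \<in> F2" by blast
    then show "\<exists>u v. e = {u, v} \<and> u \<noteq> v \<and> u \<in> I1 \<union> I2 \<and> v \<in> I1 \<union> I2"
    proof cases
      case 1 then show ?thesis using ab a b by blast
    next
      case 2 then obtain u v where "e = {u, v}" "u \<noteq> v" "u \<in> I1" "v \<in> I1" using tree_edge[OF T1] by blast
      then show ?thesis by blast
    next
      case 3 then obtain u v where "e = {u, v}" "u \<noteq> v" "u \<in> I2" "v \<in> I2" using tree_edge[OF T2] by blast
      then show ?thesis by blast
    qed
  qed
  have "connected_on F1 I1" using T1 unfolding is_tree_def by blast
  then have c1: "connected_on ?F I1" by (rule conn_mono) blast
  have "connected_on F2 I2" using T2 unfolding is_tree_def by blast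
  then have c2: "connected_on ?F I2" by (rule conn_mono) blast
  have conn: "connected_on ?F (I1 \<union> I2)" using conn_Un[OF c1 c2 a b] by simp
  have card: "card ?F + 1 = card (I1 \<union> I2)"
  proof -
    have f1: "finite F1" "finite F2" using tree_finF[OF T1] tree_finF[OF T2] by auto
    have d: "F1 \<inter> F2 = {}"
    proof (rule ccontr)
      assume "F1 \<inter> F2 \<noteq> {}"
      then obtain e where "e \<in> F1" "e \<in> F2" by blast
      then obtain u v where "e = {u, v}" "u \<in> I1" using tree_edge[OF T1] by blast
      moreover have "e \<subseteq> I2" using tree_edge_sub[OF T2 \<open>e \<in> F2\<close>] .
      ultimately show False using dis by blast
    qed
    have n1: "{a, b} \<notin> F1"
    proof
      assume "{a, b} \<in> F1" then have "b \<in> I1" using tree_edge_sub[OF T1] by blast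
      then show False using b dis by blast
    qed
    have n2: "{a, b} \<notin> F2"
    proof
      assume "{a, b} \<in> F2" then have "a \<in> I2" using tree_edge_sub[OF T2] by blast
      then show False using a dis by blast
    qed
    have n: "{a, b} \<notin> F1 \<union> F2" using n1 n2 by blast
    have "card ?F = card F1 + card F2 + 1" using f1 d n by (simp add: card_Un_disjoint)
    moreover have "card (I1 \<union> I2) = card I1 + card I2"
      using tree_fin[OF T1] tree_fin[OF T2] dis by (simp add: card_Un_disjoint)
    ultimately show ?thesis using T1 T2 unfolding is_tree_def by simp
  qed
  have T: "is_tree (I1 \<union> I2) ?F" unfolding is_tree_def using sg conn card a by (intro conjI) auto
  have Tv: "{i \<in> I1 \<union> I2. v \<in> ?B i} = {i \<in> I1. v \<in> B1 i} \<union> {i \<in> I2. v \<in> B2 i}" for v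
    using dis by auto
  show ?thesis
  proof (rule td_intro)
    show "is_tree (I1 \<union> I2) ?F" by (rule T)
  next
    fix i assume "i \<in> I1 \<union> I2" then show "?B i \<subseteq> V1 \<union> V2"
      using td_parts(2)[OF td1] td_parts(2)[OF td2] by (cases "i \<in> I1") auto
  next
    fix v assume "v \<in> V1 \<union> V2"
    then show "\<exists>i\<in>I1 \<union> I2. v \<in> ?B i"
    proof
      assume "v \<in> V1" then obtain i where "i \<in> I1" "v \<in> B1 i" using td_parts(3)[OF td1] by blast
      then show ?thesis by (intro bexI[of _ i]) auto
    next
      assume "v \<in> V2" then obtain i where "i \<in> I2" "v \<in> B2 i" using td_parts(3)[OF td2] by blast
      then show ?thesis using dis by (intro bexI[of _ i]) auto
    qed
  next
    fix e assume "e \<in> E1 \<union> E2"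
    then show "\<exists>i\<in>I1 \<union> I2. e \<subseteq> ?B i"
    proof
      assume "e \<in> E1" then obtain i where "i \<in> I1" "e \<subseteq> B1 i" using td_parts(4)[OF td1] by blast
      then show ?thesis by (intro bexI[of _ i]) auto
    next
      assume "e \<in> E2" then obtain i where "i \<in> I2" "e \<subseteq> B2 i" using td_parts(4)[OF td2] by blast
      then show ?thesis using dis by (intro bexI[of _ i]) auto
    qed
  next
    fix v assume v: "v \<in> V1 \<union> V2"
    have e1: "{i \<in> I1. v \<in> B1 i} = {}" if "v \<notin> V1" using that td_parts(2)[OF td1] by blast
    have e2: "{i \<in> I2. v \<in> B2 i} = {}" if "v \<notin> V2" using that td_parts(2)[OF td2] by blast
    have k1: "connected_on ?F {i \<in> I1. v \<in> B1 i}" if "v \<in> V1"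
      using td_parts(5)[OF td1 that] by (rule conn_mono) blast
    have k2: "connected_on ?F {i \<in> I2. v \<in> B2 i}" if "v \<in> V2"
      using td_parts(5)[OF td2 that] by (rule conn_mono) blast
    show "connected_on ?F {i \<in> I1 \<union> I2. v \<in> ?B i}"
      unfolding Tv
    proof (cases "v \<in> V1")
      case True
      show "connected_on ?F ({i \<in> I1. v \<in> B1 i} \<union> {i \<in> I2. v \<in> B2 i})"
      proof (cases "v \<in> V2")
        case True
        have "v \<in> B1 a" "v \<in> B2 b" using Ca Cb \<open>v \<in> V1\<close> True by auto
        then show ?thesis using conn_Un[OF k1[OF \<open>v \<in> V1\<close>] k2[OF True], of a b] a b by simp
      next
        case False
        have E: "{i \<in> I2. v \<in> B2 i} = {}" using e2[OF False] .
        show ?thesis unfolding E using k1[OF True] by simp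
      qed
    next
      case False
      then have "v \<in> V2" using v by blast
      have E: "{i \<in> I1. v \<in> B1 i} = {}" using e1[OF False] .
      show "connected_on ?F ({i \<in> I1. v \<in> B1 i} \<union> {i \<in> I2. v \<in> B2 i})" unfolding E using k2[OF \<open>v \<in> V2\<close>] by simp
    qed
  qed
qed

lemma tw_glue:
  assumes "tw_le V1 E1 k" "tw_le V2 E2 k" "V1 \<inter> V2 \<subseteq> {u, v}"
    "u \<in> V1 \<inter> V2 \<and> v \<in> V1 \<inter> V2 \<and> u \<noteq> v \<longrightarrow> {u, v} \<in> E1 \<and> {u, v} \<in> E2"
  shows "tw_le (V1 \<union> V2) (E1 \<union> E2) k"
proof -
  obtain I1 :: "nat set" and F1 B1 where td1: "tree_decomposition V1 E1 I1 F1 B1"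
    and w1: "\<forall>i\<in>I1. card (B1 i) \<le> k + 1" using assms(1) unfolding tw_le_def by blast
  obtain I2 :: "nat set" and F2 B2 where td2: "tree_decomposition V2 E2 I2 F2 B2"
    and w2: "\<forall>i\<in>I2. card (B2 i) \<le> k + 1" using assms(2) unfolding tw_le_def by blast
  let ?f = "\<lambda>i::nat. 2 * i" and ?g = "\<lambda>i::nat. 2 * i + 1"
  have inf1: "inj ?f" by (rule injI) simp
  have inf2: "inj ?g" by (rule injI) simp
  note t1 = td_relabel[OF td1 inf1] and t2 = td_relabel[OF td2 inf2]
  have dis: "?f ` I1 \<inter> ?g ` I2 = {}" by auto presburger
  obtain a where a: "a \<in> ?f ` I1" "V1 \<inter> V2 \<subseteq> B1 (inv ?f a)"
    using td_bag[OF t1, of "V1 \<inter> V2" u v] assms(3,4) by blast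
  obtain b where b: "b \<in> ?g ` I2" "V1 \<inter> V2 \<subseteq> B2 (inv ?g b)"
    using td_bag[OF t2, of "V1 \<inter> V2" u v] assms(3,4) by blast
  note G = td_glue[OF t1 t2 dis a(1) b(1) a(2) b(2)]
  have "\<forall>i\<in>?f ` I1 \<union> ?g ` I2. card (if i \<in> ?f ` I1 then B1 (inv ?f i) else B2 (inv ?g i)) \<le> k + 1"
  proof
    fix i assume "i \<in> ?f ` I1 \<union> ?g ` I2"
    then show "card (if i \<in> ?f ` I1 then B1 (inv ?f i) else B2 (inv ?g i)) \<le> k + 1"
    proof
      assume "i \<in> ?f ` I1" then obtain j where "j \<in> I1" "i = 2 * j" by blast
      then show ?thesis using w1 inf1 by simp
    next
      assume i: "i \<in> ?g ` I2" then obtain j where j: "j \<in> I2" "i = 2 * j + 1" by blast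
      then have "i \<notin> ?f ` I1" using dis i by blast
      moreover have "inv ?g i = j" using inv_f_f[OF inf2, of j] j(2) by simp
      ultimately show ?thesis using w2 j by simp
    qed
  qed
  then show ?thesis using G unfolding tw_le_def by blast
qed

lemma bagset_conn:
  assumes td: "tree_decomposition W EH I F B" and X: "X \<subseteq> W" and c: "connected_on EH X"
  shows "connected_on F {i \<in> I. X \<inter> B i \<noteq> {}}"
proof -
  let ?T = "{i \<in> I. X \<inter> B i \<noteq> {}}"
  let ?R = "\<lambda>a b. a \<in> ?T \<and> b \<in> ?T \<and> {a, b} \<in> F"
  have base0: "?R\<^sup>*\<^sup>* i i'" if "x \<in> X" "i \<in> I" "x \<in> B i" "i' \<in> I" "x \<in> B i'" for x i i'
  proof -
    have "connected_on F {i \<in> I. x \<in> B i}" using td_parts(5)[OF td] X that(1) by blast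
    then have "(\<lambda>a b. a \<in> {i \<in> I. x \<in> B i} \<and> b \<in> {i \<in> I. x \<in> B i} \<and> {a, b} \<in> F)\<^sup>*\<^sup>* i i'"
      using that unfolding connected_on_def by blast
    then show ?thesis by (rule rt_mono) (use that(1) in blast)
  qed
  have main: "\<forall>i\<in>I. \<forall>i'\<in>I. x \<in> B i \<longrightarrow> y \<in> B i' \<longrightarrow> ?R\<^sup>*\<^sup>* i i'"
    if "(\<lambda>a b. a \<in> X \<and> b \<in> X \<and> {a, b} \<in> EH)\<^sup>*\<^sup>* x y" "x \<in> X" for x y
    using that
  proof (induction rule: rtranclp_induct)
    case base then show ?case using base0 by blast
  next
    case (step y z)
    show ?case
    proof (intro ballI impI)
      fix i i' assume ii: "i \<in> I" "i' \<in> I" "x \<in> B i" "z \<in> B i'"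
      obtain m where m: "m \<in> I" "{y, z} \<subseteq> B m" using td_parts(4)[OF td] step(2) by blast
      have "?R\<^sup>*\<^sup>* i m" using step(3)[OF step(4)] ii m by blast
      moreover have "?R\<^sup>*\<^sup>* m i'" using base0[of z m i'] step(2) ii m by blast
      ultimately show "?R\<^sup>*\<^sup>* i i'" by (rule rtranclp_trans)
    qed
  qed
  show ?thesis
    unfolding connected_on_def
  proof (intro ballI)
    fix i i' assume "i \<in> ?T" "i' \<in> ?T"
    then obtain x y where "x \<in> X" "x \<in> B i" "y \<in> X" "y \<in> B i'" "i \<in> I" "i' \<in> I" by blast
    then have "(\<lambda>a b. a \<in> X \<and> b \<in> X \<and> {a, b} \<in> EH)\<^sup>*\<^sup>* x y" using c unfolding connected_on_def by blast
    then show "?R\<^sup>*\<^sup>* i i'" using main \<open>x \<in> X\<close> \<open>x \<in> B i\<close> \<open>y \<in> B i'\<close> \<open>i \<in> I\<close> \<open>i' \<in> I\<close> by blast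
  qed
qed

lemma ne_if_mem: "x \<in> A \<Longrightarrow> A \<noteq> {}" by blast
lemma ne_if_mem2: "x \<in> A \<Longrightarrow> x \<in> B \<Longrightarrow> A \<inter> B \<noteq> {}" by blast

lemma no_K4_gen:
  fixes X :: "nat \<Rightarrow> 'a set" and W :: "'a set"
  assumes tw: "tw_le W EH 2" and fin: "finite W"
    and X: "\<forall>k<4. X k \<subseteq> W \<and> X k \<noteq> {} \<and> connected_on EH (X k)"
    and dj: "\<forall>k<4. \<forall>k'<4. k \<noteq> k' \<longrightarrow> X k \<inter> X k' = {}"
    and adj: "\<forall>k<4. \<forall>k'<4. k \<noteq> k' \<longrightarrow> (\<exists>a\<in>X k. \<exists>b\<in>X k'. {a, b} \<in> EH)"
  shows False
proof -
  obtain I :: "nat set" and F B where td: "tree_decomposition W EH I F B"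
    and w: "\<forall>i\<in>I. card (B i) \<le> 2 + 1" using tw unfolding tw_le_def by blast
  let ?T = "\<lambda>k. {i \<in> I. X k \<inter> B i \<noteq> {}}"
  have h1: "\<forall>k\<in>{..<4::nat}. ?T k \<subseteq> I \<and> ?T k \<noteq> {} \<and> connected_on F (?T k)"
  proof
    fix k :: nat assume "k \<in> {..<4}"
    then have k: "X k \<subseteq> W" "X k \<noteq> {}" "connected_on EH (X k)" using X by auto
    then obtain x where "x \<in> X k" by blast
    then obtain i where "i \<in> I" "x \<in> B i" using td_parts(3)[OF td] k(1) by blast
    then have "i \<in> ?T k" using \<open>x \<in> X k\<close> by blast
    then have "?T k \<noteq> {}" by (rule ne_if_mem)
    then show "?T k \<subseteq> I \<and> ?T k \<noteq> {} \<and> connected_on F (?T k)" using bagset_conn[OF td k(1) k(3)] by blast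
  qed
  have h2: "\<forall>k\<in>{..<4::nat}. \<forall>k'\<in>{..<4}. ?T k \<inter> ?T k' \<noteq> {}"
  proof (intro ballI)
    fix k k' :: nat assume kk: "k \<in> {..<4}" "k' \<in> {..<4}"
    show "?T k \<inter> ?T k' \<noteq> {}"
    proof (cases "k = k'")
      case True
      have "?T k \<noteq> {}" using h1 kk(1) by blast
      then show ?thesis using True by simp
    next
      case False
      then obtain a b where ab: "a \<in> X k" "b \<in> X k'" "{a, b} \<in> EH" using adj kk by blast
      then obtain i where "i \<in> I" "{a, b} \<subseteq> B i" using td_parts(4)[OF td] by blast
      then have "i \<in> ?T k" "i \<in> ?T k'" using ab by blast+
      then show ?thesis by (rule ne_if_mem2)
    qed
  qed
  obtain i where i: "i \<in> I" "\<forall>k\<in>{..<4::nat}. i \<in> ?T k" using helly[where T = "\<lambda>k. {i \<in> I. X k \<inter> B i \<noteq> {}}" and K = "{..<4}", OF td_parts(1)[OF td] h1 h2] by blast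
  define g where "g = (\<lambda>k. SOME x. x \<in> X k \<inter> B i)"
  have g: "g k \<in> X k \<inter> B i" if "k < 4" for k
  proof -
    have "i \<in> ?T k" using i(2) that by blast
    then have "\<exists>x. x \<in> X k \<inter> B i" by blast
    then show ?thesis unfolding g_def by (rule someI_ex)
  qed
  have "inj_on g {..<4}"
  proof (rule inj_onI)
    fix k k' assume kk: "k \<in> {..<4::nat}" "k' \<in> {..<4::nat}" "g k = g k'"
    show "k = k'"
    proof (rule ccontr)
      assume "k \<noteq> k'"
      then have d: "X k \<inter> X k' = {}" using dj kk by auto
      have a1: "g k \<in> X k" using g[of k] kk(1) by auto
      have a2: "g k' \<in> X k'" using g[of k'] kk(2) by auto
      have a3: "g k' \<in> X k" using a1 kk(3) by simp
      show False using d a2 a3 by blast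
    qed
  qed
  then have "card (g ` {..<4}) = card {..<4::nat}" by (rule card_image)
  then have "card (g ` {..<4}) = 4" by simp
  moreover have "g ` {..<4} \<subseteq> B i" using g by blast
  moreover have "finite (B i)" using td_parts(2)[OF td i(1)] fin finite_subset by blast
  ultimately have "4 \<le> card (B i)" using card_mono by metis
  moreover have "card (B i) \<le> 3" using w i(1) by simp
  ultimately show False by linarith
qed


lemma all4: "(\<forall>k::nat<4. P k) = (P 0 \<and> P 1 \<and> P 2 \<and> P 3)"
proof
  assume "\<forall>k<4. P k" then show "P 0 \<and> P 1 \<and> P 2 \<and> P 3" by simp
next
  assume h: "P 0 \<and> P 1 \<and> P 2 \<and> P 3"
  show "\<forall>k<4. P k"
  proof (intro allI impI)
    fix k :: nat assume "k < 4"
    then have "k = 0 \<or> k = 1 \<or> k = 2 \<or> k = 3" by linarith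
    then show "P k" using h by auto
  qed
qed

definition adjs :: "'a set set \<Rightarrow> 'a set \<Rightarrow> 'a set \<Rightarrow> bool" where
  "adjs EH A B \<longleftrightarrow> (\<exists>a\<in>A. \<exists>b\<in>B. {a, b} \<in> EH)"

lemma adjs_sym: "adjs EH A B \<Longrightarrow> adjs EH B A"
  unfolding adjs_def by (metis insert_commute)

lemma adjsI: "a \<in> A \<Longrightarrow> b \<in> B \<Longrightarrow> {a, b} \<in> EH \<Longrightarrow> adjs EH A B"
  unfolding adjs_def by blast

lemma no_K4:
  fixes A B C D W :: "'a set"
  assumes tw: "tw_le W EH 2" and fin: "finite W"
    and sub: "A \<subseteq> W" "B \<subseteq> W" "C \<subseteq> W" "D \<subseteq> W"
    and ne: "A \<noteq> {}" "B \<noteq> {}" "C \<noteq> {}" "D \<noteq> {}"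
    and con: "connected_on EH A" "connected_on EH B" "connected_on EH C" "connected_on EH D"
    and dis: "A \<inter> B = {}" "A \<inter> C = {}" "A \<inter> D = {}" "B \<inter> C = {}" "B \<inter> D = {}" "C \<inter> D = {}"
    and adj: "adjs EH A B" "adjs EH A C" "adjs EH A D" "adjs EH B C" "adjs EH B D" "adjs EH C D"
  shows False
proof -
  define X where "X = (\<lambda>k::nat. [A, B, C, D] ! k)"
  have X: "X 0 = A" "X 1 = B" "X 2 = C" "X 3 = D" unfolding X_def by simp_all
  show False
  proof (rule no_K4_gen[OF tw fin, of X])
    show "\<forall>k<4. X k \<subseteq> W \<and> X k \<noteq> {} \<and> connected_on EH (X k)"
      unfolding all4 X using sub ne con by blast
  next
    show "\<forall>k<4. \<forall>k'<4. k \<noteq> k' \<longrightarrow> X k \<inter> X k' = {}"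
      unfolding all4 X using dis by (simp add: Int_commute)
  next
    have a: "\<forall>k<4. \<forall>k'<4. k \<noteq> k' \<longrightarrow> adjs EH (X k) (X k')"
      unfolding all4 X using adj adjs_sym[OF adj(1)] adjs_sym[OF adj(2)] adjs_sym[OF adj(3)] adjs_sym[OF adj(4)] adjs_sym[OF adj(5)] adjs_sym[OF adj(6)] by simp
    then show "\<forall>k<4. \<forall>k'<4. k \<noteq> k' \<longrightarrow> (\<exists>a\<in>X k. \<exists>b\<in>X k'. {a, b} \<in> EH)"
      unfolding adjs_def by blast
  qed
qed


locale ladder =
  fixes V :: "'a set" and E :: "'a set set" and p q :: "nat \<Rightarrow> 'a"
  assumes sg: "simple_graph V E"
    and ip: "induced_path V E p 9"
    and iq: "induced_path V E q 9"
    and djpq: "p ` {1..9} \<inter> q ` {1..9} = {}"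
    and rung: "\<forall>i\<in>{1..9}. {p i, q i} \<in> E"
    and twL: "tw_le (p ` {1..9} \<union> q ` {1..9}) (induced_edges E (p ` {1..9} \<union> q ` {1..9})) 2"
    and nb: "\<forall>v \<in> p ` {1..9} \<union> q ` {1..9}.
           (\<exists>w \<in> V - (p ` {1..9} \<union> q ` {1..9}). {v, w} \<in> E) \<longrightarrow> v \<in> {p 1, p 9, q 1, q 9}"
begin

lemma finV: "finite V" using sg unfolding simple_graph_def by blast

lemma edgeE: "e \<in> E \<Longrightarrow> \<exists>a b. e = {a, b} \<and> a \<noteq> b \<and> a \<in> V \<and> b \<in> V"
  using sg unfolding simple_graph_def by blast

lemma p_eq: "i \<in> {1..9} \<Longrightarrow> j \<in> {1..9} \<Longrightarrow> p i = p j \<longleftrightarrow> i = j"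
  using ip unfolding induced_path_def inj_on_def by blast

lemma q_eq: "i \<in> {1..9} \<Longrightarrow> j \<in> {1..9} \<Longrightarrow> q i = q j \<longleftrightarrow> i = j"
  using iq unfolding induced_path_def inj_on_def by blast

lemma pq_neq: "i \<in> {1..9} \<Longrightarrow> j \<in> {1..9} \<Longrightarrow> p i \<noteq> q j"
  using djpq by blast

lemma p_V: "i \<in> {1..9} \<Longrightarrow> p i \<in> V" using ip unfolding induced_path_def by blast
lemma q_V: "i \<in> {1..9} \<Longrightarrow> q i \<in> V" using iq unfolding induced_path_def by blast

lemma p_edge: "i \<in> {1..8} \<Longrightarrow> {p i, p (Suc i)} \<in> E"
proof -
  assume "i \<in> {1..8}"
  then have "i \<in> {1..9}" "Suc i \<in> {1..9}" by auto
  then show ?thesis using ip unfolding induced_path_def by simp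
qed

lemma q_edge: "i \<in> {1..8} \<Longrightarrow> {q i, q (Suc i)} \<in> E"
proof -
  assume "i \<in> {1..8}"
  then have "i \<in> {1..9}" "Suc i \<in> {1..9}" by auto
  then show ?thesis using iq unfolding induced_path_def by simp
qed

lemma r_edge: "i \<in> {1..9} \<Longrightarrow> {p i, q i} \<in> E" using rung by blast

lemma nbE: "a \<in> p ` {1..9} \<union> q ` {1..9} \<Longrightarrow> b \<in> V \<Longrightarrow> b \<notin> p ` {1..9} \<union> q ` {1..9} \<Longrightarrow> {a, b} \<in> E
  \<Longrightarrow> a \<in> {p 1, p 9, q 1, q 9}"
  using nb by blast

lemmas dist = p_eq q_eq pq_neq pq_neq[symmetric]

end

lemma ladder_swap: assumes "ladder V E p q" shows "ladder V E q p"
proof -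
  interpret ladder V E p q by fact
  show ?thesis
  proof
    show "simple_graph V E" by (rule sg)
    show "induced_path V E q 9" by (rule iq)
    show "induced_path V E p 9" by (rule ip)
    show "q ` {1..9} \<inter> p ` {1..9} = {}" using djpq by blast
    show "\<forall>i\<in>{1..9}. {q i, p i} \<in> E" using rung by (simp add: insert_commute)
    show "tw_le (q ` {1..9} \<union> p ` {1..9}) (induced_edges E (q ` {1..9} \<union> p ` {1..9})) 2"
      using twL by (simp add: Un_commute)
    show "\<forall>v\<in>q ` {1..9} \<union> p ` {1..9}. (\<exists>w\<in>V - (q ` {1..9} \<union> p ` {1..9}). {v, w} \<in> E) \<longrightarrow> v \<in> {q 1, q 9, p 1, p 9}"
      using nb by (simp add: Un_commute insert_commute)
  qed
qed

lemma rev_img: "(\<lambda>i. f (10 - i)) ` {1..9::nat} = f ` {1..9}"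
proof -
  have "(\<lambda>i::nat. 10 - i) ` {1..9} = {1..9}"
  proof
    show "(\<lambda>i::nat. 10 - i) ` {1..9} \<subseteq> {1..9}" by auto
    show "{1..9} \<subseteq> (\<lambda>i::nat. 10 - i) ` {1..9}"
    proof
      fix x :: nat assume "x \<in> {1..9}"
      then have "x = 10 - (10 - x)" "10 - x \<in> {1..9}" by auto
      then show "x \<in> (\<lambda>i. 10 - i) ` {1..9}" by blast
    qed
  qed
  then have "f ` ((\<lambda>i::nat. 10 - i) ` {1..9}) = f ` {1..9}" by simp
  then show ?thesis by (simp add: image_image)
qed

lemma rev_path: assumes "induced_path V E p 9" shows "induced_path V E (\<lambda>i. p (10 - i)) 9"
  unfolding induced_path_def
proof (intro conjI)
  have ij: "inj_on p {1..9}" using assms unfolding induced_path_def by blast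
  show "inj_on (\<lambda>i. p (10 - i)) {1..9}"
  proof (rule inj_onI)
    fix x y :: nat assume "x \<in> {1..9}" "y \<in> {1..9}" "p (10 - x) = p (10 - y)"
    moreover have "10 - x \<in> {1..9}" "10 - y \<in> {1..9}" using \<open>x \<in> {1..9}\<close> \<open>y \<in> {1..9}\<close> by auto
    ultimately have "10 - x = 10 - y" using ij unfolding inj_on_def by blast
    then show "x = y" using \<open>x \<in> {1..9}\<close> \<open>y \<in> {1..9}\<close> by auto
  qed
  show "(\<lambda>i. p (10 - i)) ` {1..9} \<subseteq> V" unfolding rev_img using assms unfolding induced_path_def by blast
  show "\<forall>i\<in>{1..9}. \<forall>j\<in>{1..9}. ({p (10 - i), p (10 - j)} \<in> E) = (i = j + 1 \<or> j = i + 1)"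
  proof (intro ballI)
    fix i j :: nat assume ij: "i \<in> {1..9}" "j \<in> {1..9}"
    then have "10 - i \<in> {1..9}" "10 - j \<in> {1..9}" by auto
    then have "({p (10 - i), p (10 - j)} \<in> E) = (10 - i = 10 - j + 1 \<or> 10 - j = 10 - i + 1)"
      using assms unfolding induced_path_def by blast
    also have "\<dots> = (i = j + 1 \<or> j = i + 1)" using ij by auto
    finally show "({p (10 - i), p (10 - j)} \<in> E) = (i = j + 1 \<or> j = i + 1)" .
  qed
qed

lemma ladder_rev: assumes "ladder V E p q" shows "ladder V E (\<lambda>i. p (10 - i)) (\<lambda>i. q (10 - i))"
proof -
  interpret ladder V E p q by fact
  show ?thesis
  proof
    show "simple_graph V E" by (rule sg)
    show "induced_path V E (\<lambda>i. p (10 - i)) 9" by (rule rev_path[OF ip])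
    show "induced_path V E (\<lambda>i. q (10 - i)) 9" by (rule rev_path[OF iq])
    show "(\<lambda>i. p (10 - i)) ` {1..9} \<inter> (\<lambda>i. q (10 - i)) ` {1..9} = {}" unfolding rev_img by (rule djpq)
    show "\<forall>i\<in>{1..9}. {p (10 - i), q (10 - i)} \<in> E"
    proof
      fix i :: nat assume "i \<in> {1..9}" then have "10 - i \<in> {1..9}" by auto
      then show "{p (10 - i), q (10 - i)} \<in> E" using rung by blast
    qed
    show "tw_le ((\<lambda>i. p (10 - i)) ` {1..9} \<union> (\<lambda>i. q (10 - i)) ` {1..9})
       (induced_edges E ((\<lambda>i. p (10 - i)) ` {1..9} \<union> (\<lambda>i. q (10 - i)) ` {1..9})) 2"
      unfolding rev_img by (rule twL)
    show "\<forall>v\<in>(\<lambda>i. p (10 - i)) ` {1..9} \<union> (\<lambda>i. q (10 - i)) ` {1..9}.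
       (\<exists>w\<in>V - ((\<lambda>i. p (10 - i)) ` {1..9} \<union> (\<lambda>i. q (10 - i)) ` {1..9}). {v, w} \<in> E) \<longrightarrow>
       v \<in> {p (10 - 1), p (10 - 9), q (10 - 1), q (10 - 9)}"
      unfolding rev_img using nb by auto
  qed
qed


lemma adjsI': "a \<in> A \<Longrightarrow> b \<in> B \<Longrightarrow> {b, a} \<in> EH \<Longrightarrow> adjs EH A B"
  unfolding adjs_def by (metis insert_commute)

lemma conn_pair: assumes "{a, b} \<in> F" shows "connected_on F {a, b}"
proof -
  have "connected_on F (insert a {b})"
    by (rule conn_insert[where a=b]) (use assms in \<open>auto simp: conn_single insert_commute\<close>)
  then show ?thesis by simp
qed

lemma conn_ins: "connected_on F A \<Longrightarrow> a \<in> A \<Longrightarrow> {b, a} \<in> F \<or> {a, b} \<in> F \<Longrightarrow> connected_on F (insert b A)"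
  using conn_insert[of F A a b] by (auto simp: insert_commute)

context ladder begin

lemma pe: "i \<in> {1..8} \<Longrightarrow> p i \<notin> S \<Longrightarrow> p (Suc i) \<notin> S \<Longrightarrow> {p i, p (Suc i)} \<in> del_edges (E - {{p 5, q 5}}) S"
proof -
  assume a: "i \<in> {1..8}" "p i \<notin> S" "p (Suc i) \<notin> S"
  have "Suc i \<in> {1..9}" "i \<in> {1..9}" "(5::nat) \<in> {1..9}" using a by auto
  then have "p (Suc i) \<noteq> q 5" "p i \<noteq> q 5" using pq_neq by blast+
  then have "{p i, p (Suc i)} \<noteq> {p 5, q 5}" by (auto simp: doubleton_eq_iff)
  then show ?thesis using p_edge[OF a(1)] a(2,3) unfolding del_edges_def by auto
qed

lemma qe: "i \<in> {1..8} \<Longrightarrow> q i \<notin> S \<Longrightarrow> q (Suc i) \<notin> S \<Longrightarrow> {q i, q (Suc i)} \<in> del_edges (E - {{p 5, q 5}}) S"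
proof -
  assume a: "i \<in> {1..8}" "q i \<notin> S" "q (Suc i) \<notin> S"
  have "Suc i \<in> {1..9}" "i \<in> {1..9}" "(5::nat) \<in> {1..9}" using a by auto
  then have "q (Suc i) \<noteq> p 5" "q i \<noteq> p 5" using pq_neq by metis+
  then have "{q i, q (Suc i)} \<noteq> {p 5, q 5}" by (auto simp: doubleton_eq_iff)
  then show ?thesis using q_edge[OF a(1)] a(2,3) unfolding del_edges_def by auto
qed

lemma re: "i \<in> {1..9} \<Longrightarrow> i \<noteq> 5 \<Longrightarrow> p i \<notin> S \<Longrightarrow> q i \<notin> S \<Longrightarrow> {p i, q i} \<in> del_edges (E - {{p 5, q 5}}) S"
proof -
  assume a: "i \<in> {1..9}" "i \<noteq> 5" "p i \<notin> S" "q i \<notin> S"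
  have "(5::nat) \<in> {1..9}" by auto
  then have "p i \<noteq> p 5" "p i \<noteq> q 5" using a p_eq pq_neq by auto
  then have "{p i, q i} \<noteq> {p 5, q 5}" by (metis doubleton_eq_iff)
  then show ?thesis using r_edge[OF a(1)] a(3,4) unfolding del_edges_def by auto
qed

lemma block_K4:
  assumes tw: "tw_le (V - S) (del_edges (E - {{p 5, q 5}}) S) 2"
    and Y: "Y \<subseteq> V - S" "connected_on (del_edges (E - {{p 5, q 5}}) S) Y" "p 2 \<in> Y" "p 5 \<in> Y \<or> q 5 \<in> Y"
    and ns: "p 3 \<notin> S" "p 4 \<notin> S" "q 2 \<notin> S" "q 3 \<notin> S" "q 4 \<notin> S"
    and dY: "Y \<inter> {p 3, p 4, q 2, q 3, q 4} = {}"
  shows False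
proof -
  let ?H = "del_edges (E - {{p 5, q 5}}) S"
  have fin: "finite (V - S)" using finV by simp
  have p2S: "p 2 \<notin> S" "p 2 \<in> V" using Y by auto
  have inV: "p 3 \<in> V" "p 4 \<in> V" "q 2 \<in> V" "q 3 \<in> V" "q 4 \<in> V" using p_V q_V by auto
  have e23: "{p 2, p 3} \<in> ?H" using pe[of 2 S] p2S ns by (simp add: numeral_eq_Suc)
  have e34: "{p 3, p 4} \<in> ?H" using pe[of 3 S] ns by (simp add: numeral_eq_Suc)
  have f23: "{q 2, q 3} \<in> ?H" using qe[of 2 S] ns by (simp add: numeral_eq_Suc)
  have f34: "{q 3, q 4} \<in> ?H" using qe[of 3 S] ns by (simp add: numeral_eq_Suc)
  have r2: "{p 2, q 2} \<in> ?H" using re[of 2 S] p2S ns by simp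
  have r3: "{p 3, q 3} \<in> ?H" using re[of 3 S] ns by simp
  have r4: "{p 4, q 4} \<in> ?H" using re[of 4 S] ns by simp
  have d: "p 3 \<noteq> p 4" "q 2 \<noteq> q 3" "q 3 \<noteq> q 4" "q 2 \<noteq> q 4" "p 3 \<noteq> q 2" "p 3 \<noteq> q 3" "p 3 \<noteq> q 4"
      "p 4 \<noteq> q 2" "p 4 \<noteq> q 3" "p 4 \<noteq> q 4"
    using p_eq[of 3 4] q_eq[of 2 3] q_eq[of 3 4] q_eq[of 2 4] pq_neq by auto
  from Y(4) show False
  proof
    assume p5: "p 5 \<in> Y"
    have p5S: "p 5 \<notin> S" using p5 Y(1) by blast
    have e45: "{p 4, p 5} \<in> ?H" using pe[of 4 S] ns p5S by (simp add: numeral_eq_Suc)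
    have cD: "connected_on ?H {q 2, q 3, q 4}"
    proof -
      have "connected_on ?H {q 3, q 4}" by (rule conn_pair[OF f34])
      then show "connected_on ?H (insert (q 2) {q 3, q 4})" by (rule conn_ins) (use f23 in auto)
    qed
    show False
    proof (rule no_K4[OF tw fin, of Y "{p 4}" "{p 3}" "{q 2, q 3, q 4}"])
      show "Y \<subseteq> V - S" "{p 4} \<subseteq> V - S" "{p 3} \<subseteq> V - S" "{q 2, q 3, q 4} \<subseteq> V - S"
        using Y(1) ns inV by auto
      show "Y \<noteq> {}" "{p 4} \<noteq> {}" "{p 3} \<noteq> {}" "{q 2, q 3, q 4} \<noteq> {}" using Y(3) by auto
      show "connected_on ?H Y" "connected_on ?H {p 4}" "connected_on ?H {p 3}" "connected_on ?H {q 2, q 3, q 4}"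
        using Y(2) conn_single cD by auto
      show "Y \<inter> {p 4} = {}" "Y \<inter> {p 3} = {}" "Y \<inter> {q 2, q 3, q 4} = {}" using dY by auto
      show "{p 4} \<inter> {p 3} = {}" "{p 4} \<inter> {q 2, q 3, q 4} = {}" "{p 3} \<inter> {q 2, q 3, q 4} = {}" using d by auto
      show "adjs ?H Y {p 4}" using adjsI'[OF p5 _ e45] by simp
      show "adjs ?H Y {p 3}" using adjsI[OF Y(3) _ e23] by simp
      show "adjs ?H Y {q 2, q 3, q 4}" using adjsI[OF Y(3) _ r2] by simp
      show "adjs ?H {p 4} {p 3}" using adjsI'[of "p 4" _ "p 3" _ ?H] e34 by simp
      show "adjs ?H {p 4} {q 2, q 3, q 4}" using adjsI[of "p 4" _ "q 4" _ ?H] r4 by simp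
      show "adjs ?H {p 3} {q 2, q 3, q 4}" using adjsI[of "p 3" _ "q 3" _ ?H] r3 by simp
    qed
  next
    assume q5: "q 5 \<in> Y"
    have q5S: "q 5 \<notin> S" using q5 Y(1) by blast
    have f45: "{q 4, q 5} \<in> ?H" using qe[of 4 S] ns q5S by (simp add: numeral_eq_Suc)
    have cC: "connected_on ?H {p 3, p 4}" by (rule conn_pair[OF e34])
    have cD: "connected_on ?H {q 2, q 3}" by (rule conn_pair[OF f23])
    show False
    proof (rule no_K4[OF tw fin, of Y "{q 4}" "{p 3, p 4}" "{q 2, q 3}"])
      show "Y \<subseteq> V - S" "{q 4} \<subseteq> V - S" "{p 3, p 4} \<subseteq> V - S" "{q 2, q 3} \<subseteq> V - S"
        using Y(1) ns inV by auto
      show "Y \<noteq> {}" "{q 4} \<noteq> {}" "{p 3, p 4} \<noteq> {}" "{q 2, q 3} \<noteq> {}" using Y(3) by auto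
      show "connected_on ?H Y" "connected_on ?H {q 4}" "connected_on ?H {p 3, p 4}" "connected_on ?H {q 2, q 3}"
        using Y(2) conn_single cC cD by auto
      show "Y \<inter> {q 4} = {}" "Y \<inter> {p 3, p 4} = {}" "Y \<inter> {q 2, q 3} = {}" using dY by auto
      show "{q 4} \<inter> {p 3, p 4} = {}" "{q 4} \<inter> {q 2, q 3} = {}" "{p 3, p 4} \<inter> {q 2, q 3} = {}" using d by auto
      show "adjs ?H Y {q 4}" using adjsI'[OF q5 _ f45] by simp
      show "adjs ?H Y {p 3, p 4}" using adjsI[OF Y(3) _ e23] by simp
      show "adjs ?H Y {q 2, q 3}" using adjsI[OF Y(3) _ r2] by simp
      show "adjs ?H {q 4} {p 3, p 4}" using adjsI'[of "q 4" _ "p 4" _ ?H] r4 by simp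
      show "adjs ?H {q 4} {q 2, q 3}" using adjsI'[of "q 4" _ "q 3" _ ?H] f34 by simp
      show "adjs ?H {p 3, p 4} {q 2, q 3}" using adjsI[of "p 3" _ "q 3" _ ?H] r3 by simp
    qed
  qed
qed

end


context ladder begin

lemma pL: "i \<in> {1..9} \<Longrightarrow> p i \<in> p ` {1..9} \<union> q ` {1..9}" by blast
lemma qL: "i \<in> {1..9} \<Longrightarrow> q i \<in> p ` {1..9} \<union> q ` {1..9}" by blast
lemma LV: "p ` {1..9} \<union> q ` {1..9} \<subseteq> V" using p_V q_V by blast

lemma edge2: assumes "e \<in> E" obtains a b where "e = {a, b}" "a \<in> V" "b \<in> V"
  using edgeE[OF assms] by blast

lemma cut_left:
  assumes S: "S \<subseteq> V" and tw: "tw_le (V - S) (del_edges (E - {{p 5, q 5}}) S) 2"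
  shows "tw_le (V - ((S - (p ` {1..9} \<union> q ` {1..9})) \<union> {p 1, q 1} \<union> (S \<inter> {p 9, q 9})))
     (del_edges E ((S - (p ` {1..9} \<union> q ` {1..9})) \<union> {p 1, q 1} \<union> (S \<inter> {p 9, q 9}))) 2"
proof -
  define L where "L = p ` {1..9} \<union> q ` {1..9}"
  define S' where "S' = (S - L) \<union> {p 1, q 1} \<union> (S \<inter> {p 9, q 9})"
  define X where "X = (V - L - S) \<union> ({p 9, q 9} - S)"
  define Lr where "Lr = L - S'"
  have c: "p 1 \<in> L" "q 1 \<in> L" "p 9 \<in> L" "q 9 \<in> L" "p 5 \<in> L" unfolding L_def using pL qL by auto
  have cV: "p 9 \<in> V" "q 9 \<in> V" using p_V q_V by auto
  have LV': "L \<subseteq> V" unfolding L_def using LV .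
  have d: "p 5 \<noteq> p 9" "p 5 \<noteq> q 9" "p 1 \<noteq> p 9" "p 1 \<noteq> q 9" "q 1 \<noteq> p 9" "q 1 \<noteq> q 9"
    using p_eq[of 5 9] p_eq[of 1 9] q_eq[of 1 9] pq_neq[of 5 9] pq_neq[of 1 9] pq_neq[of 9 1] by auto
  have p5X: "p 5 \<notin> X" unfolding X_def using c d by auto
  have XS: "X \<subseteq> V - S" unfolding X_def using cV by auto
  have tX: "tw_le X {e \<in> E. e \<subseteq> X} 2"
  proof (rule tw_restrict[OF tw])
    show "finite (V - S)" using finV by simp
    show "X \<subseteq> V - S" by (rule XS)
    show "\<forall>e\<in>{e \<in> E. e \<subseteq> X}. e \<in> del_edges (E - {{p 5, q 5}}) S \<and> e \<subseteq> X"
      unfolding del_edges_def using p5X XS by auto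
  qed
  have tL: "tw_le Lr {e \<in> E. e \<subseteq> Lr} 2"
  proof (rule tw_restrict[OF twL])
    show "finite (p ` {1..9} \<union> q ` {1..9})" by simp
    show "Lr \<subseteq> p ` {1..9} \<union> q ` {1..9}" unfolding Lr_def L_def by blast
    show "\<forall>e\<in>{e \<in> E. e \<subseteq> Lr}. e \<in> induced_edges E (p ` {1..9} \<union> q ` {1..9}) \<and> e \<subseteq> Lr"
      unfolding induced_edges_def Lr_def L_def by blast
  qed
  have XL: "X \<inter> Lr \<subseteq> {p 9, q 9}" unfolding X_def Lr_def by blast
  have r9: "{p 9, q 9} \<in> E" using r_edge[of 9] by simp
  have G: "tw_le (X \<union> Lr) ({e \<in> E. e \<subseteq> X} \<union> {e \<in> E. e \<subseteq> Lr}) 2"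
    by (rule tw_glue[OF tX tL XL]) (use r9 in blast)
  have VS: "V - S' = X \<union> Lr"
  proof
    show "V - S' \<subseteq> X \<union> Lr" unfolding X_def Lr_def S'_def by blast
    show "X \<union> Lr \<subseteq> V - S'" unfolding X_def Lr_def S'_def using LV' cV d c by auto
  qed
  have E': "\<forall>e\<in>del_edges E S'. e \<in> {e \<in> E. e \<subseteq> X} \<union> {e \<in> E. e \<subseteq> Lr} \<and> e \<subseteq> X \<union> Lr"
  proof
    fix e assume e: "e \<in> del_edges E S'"
    then have eE: "e \<in> E" and eS: "e \<inter> S' = {}" unfolding del_edges_def by auto
    obtain a b where ab: "e = {a, b}" "a \<in> V" "b \<in> V" using edge2[OF eE] by blast
    have aS: "a \<notin> S'" "b \<notin> S'" using eS ab by auto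
    have cornA: "a \<in> {p 1, p 9, q 1, q 9}" if "a \<in> L" "b \<notin> L" using nbE[of a b] that ab eE unfolding L_def by blast
    have cornB: "b \<in> {p 1, p 9, q 1, q 9}" if "b \<in> L" "a \<notin> L" using nbE[of b a] that ab eE unfolding L_def
      by (simp add: insert_commute)
    have "e \<subseteq> X \<or> e \<subseteq> Lr"
    proof (cases "a \<in> L")
      case aL: True
      show ?thesis
      proof (cases "b \<in> L")
        case True then show ?thesis using aL aS ab unfolding Lr_def by blast
      next
        case False
        then have "a \<in> {p 9, q 9}" using cornA[OF aL False] aS unfolding S'_def by blast
        then have "a \<in> X" using aS ab cV unfolding S'_def X_def by blast
        moreover have "b \<in> X" using False ab aS unfolding X_def S'_def by blast
        ultimately show ?thesis using ab by blast
      qed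
    next
      case aL: False
      show ?thesis
      proof (cases "b \<in> L")
        case True
        then have "b \<in> {p 9, q 9}" using cornB[OF True aL] aS unfolding S'_def by blast
        then have "b \<in> X" using aS ab cV unfolding S'_def X_def by blast
        moreover have "a \<in> X" using aL ab aS unfolding X_def S'_def by blast
        ultimately show ?thesis using ab by blast
      next
        case False
        then show ?thesis using aL ab aS unfolding X_def S'_def by blast
      qed
    qed
    then show "e \<in> {e \<in> E. e \<subseteq> X} \<union> {e \<in> E. e \<subseteq> Lr} \<and> e \<subseteq> X \<union> Lr" using eE by blast
  qed
  have "tw_le (V - S') (del_edges E S') 2"
  proof -
    have "finite (V - S')" using finV by simp
    then have "finite (X \<union> Lr)" unfolding VS .
    then show ?thesis unfolding VS by (rule tw_restrict[OF G _ _ E']) simp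
  qed
  then show ?thesis unfolding S'_def L_def .
qed

end


definition cross :: "'a set \<Rightarrow> 'a set set \<Rightarrow> 'a \<Rightarrow> 'a \<Rightarrow> bool" where
  "cross Ot E c d \<longleftrightarrow> (\<exists>u w. u \<in> Ot \<and> {c, u} \<in> E \<and> {d, w} \<in> E \<and>
      (\<lambda>a b. a \<in> Ot \<and> b \<in> Ot \<and> {a, b} \<in> E)\<^sup>*\<^sup>* u w)"

lemma cross_sym: "cross Ot E c d \<Longrightarrow> cross Ot E d c"
proof -
  assume "cross Ot E c d"
  then obtain u w where uw: "u \<in> Ot" "{c, u} \<in> E" "{d, w} \<in> E" "(\<lambda>a b. a \<in> Ot \<and> b \<in> Ot \<and> {a, b} \<in> E)\<^sup>*\<^sup>* u w"
    unfolding cross_def by blast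
  have "w \<in> Ot" using rt_end_in[OF uw(4) uw(1)] .
  moreover have "(\<lambda>a b. a \<in> Ot \<and> b \<in> Ot \<and> {a, b} \<in> E)\<^sup>*\<^sup>* w u" using rt_sym[OF uw(4)] .
  ultimately show "cross Ot E d c" unfolding cross_def using uw by blast
qed

lemma comp_conn:
  assumes "\<forall>a\<in>Ot. \<forall>b\<in>Ot. {a, b} \<in> E \<longrightarrow> {a, b} \<in> E'"
  shows "connected_on E' {y. (\<lambda>a b. a \<in> Ot \<and> b \<in> Ot \<and> {a, b} \<in> E)\<^sup>*\<^sup>* u y}"
proof -
  let ?R = "\<lambda>a b. a \<in> Ot \<and> b \<in> Ot \<and> {a, b} \<in> E"
  let ?A = "{y. ?R\<^sup>*\<^sup>* u y}"
  let ?R' = "\<lambda>a b. a \<in> ?A \<and> b \<in> ?A \<and> {a, b} \<in> E'"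
  have step: "?R'\<^sup>*\<^sup>* x y" if "?R\<^sup>*\<^sup>* x y" "x \<in> ?A" for x y
    using that
  proof (induction rule: rtranclp_induct)
    case base then show ?case by simp
  next
    case (step y z)
    have "y \<in> ?A" using step(1) step(4) by (auto intro: rtranclp_trans)
    moreover have "z \<in> ?A" using calculation step(2) by (auto intro: rtranclp.rtrancl_into_rtrancl)
    moreover have "{y, z} \<in> E'" using assms step(2) by blast
    ultimately show ?case using step(3)[OF step(4)] by (auto intro: rtranclp.rtrancl_into_rtrancl)
  qed
  show ?thesis
    unfolding connected_on_def
  proof (intro ballI)
    fix x y assume xy: "x \<in> ?A" "y \<in> ?A"
    from xy(1) have "?R\<^sup>*\<^sup>* u x" by simp
    then have "?R\<^sup>*\<^sup>* x u" by (rule rt_sym)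
    moreover from xy(2) have "?R\<^sup>*\<^sup>* u y" by simp
    ultimately have "?R\<^sup>*\<^sup>* x y" by (rule rtranclp_trans)
    then show "?R'\<^sup>*\<^sup>* x y" by (rule step) (rule xy(1))
  qed
qed

context ladder begin

lemma H_out:
  assumes "a \<in> V - (p ` {1..9} \<union> q ` {1..9}) - S" "b \<in> V - (p ` {1..9} \<union> q ` {1..9}) - S" "{a, b} \<in> E"
  shows "{a, b} \<in> del_edges (E - {{p 5, q 5}}) S"
proof -
  have "p 5 \<in> p ` {1..9} \<union> q ` {1..9}" using pL[of 5] by simp
  then have "p 5 \<notin> {a, b}" using assms(1,2) by blast
  then have "{a, b} \<noteq> {p 5, q 5}" by auto
  then show ?thesis using assms unfolding del_edges_def by auto
qed

lemma H_gen:
  assumes "a \<notin> S" "b \<notin> S" "{a, b} \<in> E" "a \<notin> {p 5, q 5} \<or> b \<notin> {p 5, q 5}"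
  shows "{a, b} \<in> del_edges (E - {{p 5, q 5}}) S"
  using assms unfolding del_edges_def by auto

lemma no_cross_p9:
  assumes S: "S \<subseteq> V" and tw: "tw_le (V - S) (del_edges (E - {{p 5, q 5}}) S) 2"
    and p5: "p 5 \<notin> S" and q5: "q 5 \<notin> S"
    and left: "\<forall>k\<in>{2, 3, 4}. p k \<notin> S \<and> q k \<notin> S"
    and right: "card (S \<inter> {p 6, p 7, p 8, q 6, q 7, q 8, p 9, q 9}) \<le> 1"
    and c: "c \<in> {p 1, q 1}" "c \<notin> S" and p9: "p 9 \<notin> S"
  shows "\<not> cross (V - (p ` {1..9} \<union> q ` {1..9}) - S) E c (p 9)"
proof
  define L where "L = p ` {1..9} \<union> q ` {1..9}"
  define Ot where "Ot = V - L - S"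
  let ?H = "del_edges (E - {{p 5, q 5}}) S"
  assume "cross (V - (p ` {1..9} \<union> q ` {1..9}) - S) E c (p 9)"
  then obtain u w where uw: "u \<in> Ot" "{c, u} \<in> E" "{p 9, w} \<in> E" "(\<lambda>a b. a \<in> Ot \<and> b \<in> Ot \<and> {a, b} \<in> E)\<^sup>*\<^sup>* u w"
    unfolding cross_def Ot_def L_def by blast
  define A where "A = {y. (\<lambda>a b. a \<in> Ot \<and> b \<in> Ot \<and> {a, b} \<in> E)\<^sup>*\<^sup>* u y}"
  have AO: "A \<subseteq> Ot" unfolding A_def using rt_end_in uw(1) by fastforce
  have uA: "u \<in> A" and wA: "w \<in> A" unfolding A_def using uw(4) by auto
  have cA: "connected_on ?H A" unfolding A_def
    by (rule comp_conn) (use H_out in \<open>auto simp: Ot_def L_def\<close>)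
  have OS: "Ot \<subseteq> V - S" unfolding Ot_def by blast
  have AL: "A \<inter> L = {}" using AO unfolding Ot_def by blast
  have inL: "\<And>i. i \<in> {1..9} \<Longrightarrow> p i \<in> L" "\<And>i. i \<in> {1..9} \<Longrightarrow> q i \<in> L" unfolding L_def by auto
  obtain Rt where Rt: "Rt \<subseteq> V - S" "connected_on ?H Rt" "p 9 \<in> Rt" "p 5 \<in> Rt \<or> q 5 \<in> Rt"
    "Rt \<subseteq> {p 5, p 6, p 7, p 8, p 9, q 5, q 6, q 7, q 8, q 9}"
  proof (cases "p 6 \<notin> S \<and> p 7 \<notin> S \<and> p 8 \<notin> S")
    case True
    have e: "{p 5, p 6} \<in> ?H" "{p 6, p 7} \<in> ?H" "{p 7, p 8} \<in> ?H" "{p 8, p 9} \<in> ?H"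
      using pe[of 5 S] pe[of 6 S] pe[of 7 S] pe[of 8 S] True p5 p9 by (simp_all add: numeral_eq_Suc)
    have "connected_on ?H {p 8, p 9}" by (rule conn_pair[OF e(4)])
    then have "connected_on ?H (insert (p 7) {p 8, p 9})" by (rule conn_ins[where a="p 8"]) (use e in auto)
    then have "connected_on ?H (insert (p 6) {p 7, p 8, p 9})" by (rule conn_ins[where a="p 7"]) (use e in auto)
    then have "connected_on ?H (insert (p 5) {p 6, p 7, p 8, p 9})" by (rule conn_ins[where a="p 6"]) (use e in auto)
    moreover have "{p 5, p 6, p 7, p 8, p 9} \<subseteq> V - S" using True p5 p9 p_V by auto
    ultimately show ?thesis using that[of "{p 5, p 6, p 7, p 8, p 9}"] by auto
  next
    case False
    then obtain k where k: "k \<in> {6, 7, 8}" "p k \<in> S" by auto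
    have pkin: "p k \<in> S \<inter> {p 6, p 7, p 8, q 6, q 7, q 8, p 9, q 9}" using k by auto
    have others: "x \<notin> S" if "x \<in> {q 6, q 7, q 8, q 9}" for x
    proof
      assume xS: "x \<in> S"
      have "x \<noteq> p k" using that k pq_neq[of k 6] pq_neq[of k 7] pq_neq[of k 8] pq_neq[of k 9] by auto
      then have "{p k, x} \<subseteq> S \<inter> {p 6, p 7, p 8, q 6, q 7, q 8, p 9, q 9}" using pkin xS that by auto
      then have "card {p k, x} \<le> card (S \<inter> {p 6, p 7, p 8, q 6, q 7, q 8, p 9, q 9})"
        by (intro card_mono) auto
      then show False using right \<open>x \<noteq> p k\<close> by simp
    qed
    have qs: "q 6 \<notin> S" "q 7 \<notin> S" "q 8 \<notin> S" "q 9 \<notin> S" using others by auto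
    have e: "{q 5, q 6} \<in> ?H" "{q 6, q 7} \<in> ?H" "{q 7, q 8} \<in> ?H" "{q 8, q 9} \<in> ?H"
      using qe[of 5 S] qe[of 6 S] qe[of 7 S] qe[of 8 S] qs q5 by (simp_all add: numeral_eq_Suc)
    have r9: "{p 9, q 9} \<in> ?H" using re[of 9 S] p9 qs by simp
    have "connected_on ?H {p 9, q 9}" by (rule conn_pair[OF r9])
    then have "connected_on ?H (insert (q 8) {p 9, q 9})" by (rule conn_ins[where a="q 9"]) (use e in auto)
    then have "connected_on ?H (insert (q 7) {q 8, p 9, q 9})" by (rule conn_ins[where a="q 8"]) (use e in auto)
    then have "connected_on ?H (insert (q 6) {q 7, q 8, p 9, q 9})" by (rule conn_ins[where a="q 7"]) (use e in auto)
    then have "connected_on ?H (insert (q 5) {q 6, q 7, q 8, p 9, q 9})" by (rule conn_ins[where a="q 6"]) (use e in auto)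
    moreover have "{q 5, q 6, q 7, q 8, p 9, q 9} \<subseteq> V - S" using qs q5 p9 p_V q_V by auto
    ultimately show ?thesis using that[of "{q 5, q 6, q 7, q 8, p 9, q 9}"] by auto
  qed
  have wp9: "{w, p 9} \<in> ?H"
  proof (rule H_gen)
    show "w \<notin> S" using wA AO OS by blast
    show "p 9 \<notin> S" by (rule p9)
    show "{w, p 9} \<in> E" using uw(3) by (simp add: insert_commute)
    show "w \<notin> {p 5, q 5} \<or> p 9 \<notin> {p 5, q 5}" using wA AL inL[of 5] by auto
  qed
  have cu: "{u, c} \<in> ?H"
  proof (rule H_gen)
    show "u \<notin> S" using uA AO OS by blast
    show "c \<notin> S" by (rule c(2))
    show "{u, c} \<in> E" using uw(2) by (simp add: insert_commute)
    show "u \<notin> {p 5, q 5} \<or> c \<notin> {p 5, q 5}" using uA AL inL[of 5] by auto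
  qed
  have AR: "connected_on ?H (A \<union> Rt)" using conn_Un[OF cA Rt(2) wA Rt(3)] wp9 by blast
  have cAR: "connected_on ?H (insert c (A \<union> Rt))" by (rule conn_ins[OF AR, of u]) (use uA cu in auto)
  have d5: "p 5 \<noteq> p 1" "p 5 \<noteq> q 1" "q 5 \<noteq> p 1" "q 5 \<noteq> q 1" using p_eq[of 5 1] q_eq[of 5 1] pq_neq[of 5 1] pq_neq[of 1 5] by auto
  from c(1) have "c = p 1 \<or> c = q 1" by simp
  then show False
  proof
    assume cp: "c = p 1"
    define Y where "Y = insert (p 2) (insert c (A \<union> Rt))"
    have e12: "{p 1, p 2} \<in> ?H" using pe[of 1 S] cp c(2) left by (simp add: numeral_eq_Suc)
    have cY: "connected_on ?H Y" unfolding Y_def by (rule conn_ins[OF cAR, of c]) (use e12 cp in auto)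
    show False
    proof (rule block_K4[OF tw _ cY])
      show "Y \<subseteq> V - S" unfolding Y_def using AO OS Rt(1) c left p_V q_V by auto
      show "p 2 \<in> Y" unfolding Y_def by simp
      show "p 5 \<in> Y \<or> q 5 \<in> Y" unfolding Y_def using Rt(4) by auto
      show "p 3 \<notin> S" "p 4 \<notin> S" "q 2 \<notin> S" "q 3 \<notin> S" "q 4 \<notin> S" using left by auto
      have "A \<inter> {p 3, p 4, q 2, q 3, q 4} = {}" using AL inL by auto
      moreover have "Rt \<inter> {p 3, p 4, q 2, q 3, q 4} = {}" using Rt(5) by (auto simp: dist)
      moreover have "{p 2, c} \<inter> {p 3, p 4, q 2, q 3, q 4} = {}" using cp by (auto simp: dist)
      ultimately show "Y \<inter> {p 3, p 4, q 2, q 3, q 4} = {}" unfolding Y_def by blast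
    qed
  next
    assume cq: "c = q 1"
    interpret sw: ladder V E q p by (rule ladder_swap[OF ladder_axioms])
    define Y where "Y = insert (q 2) (insert c (A \<union> Rt))"
    have e12: "{q 1, q 2} \<in> ?H" using qe[of 1 S] cq c(2) left by (simp add: numeral_eq_Suc)
    have cY: "connected_on ?H Y" unfolding Y_def by (rule conn_ins[OF cAR, of c]) (use e12 cq in auto)
    have HH: "del_edges (E - {{q 5, p 5}}) S = ?H" by (simp add: insert_commute)
    show False
    proof (rule sw.block_K4[of S Y])
      show "tw_le (V - S) (del_edges (E - {{q 5, p 5}}) S) 2" using tw HH by simp
      show "connected_on (del_edges (E - {{q 5, p 5}}) S) Y" using cY HH by simp
      show "Y \<subseteq> V - S" unfolding Y_def using AO OS Rt(1) c left p_V q_V by auto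
      show "q 2 \<in> Y" unfolding Y_def by simp
      show "q 5 \<in> Y \<or> p 5 \<in> Y" unfolding Y_def using Rt(4) by auto
      show "q 3 \<notin> S" "q 4 \<notin> S" "p 2 \<notin> S" "p 3 \<notin> S" "p 4 \<notin> S" using left by auto
      have "A \<inter> {q 3, q 4, p 2, p 3, p 4} = {}" using AL inL by auto
      moreover have "Rt \<inter> {q 3, q 4, p 2, p 3, p 4} = {}" using Rt(5) by (auto simp: dist)
      moreover have "{q 2, c} \<inter> {q 3, q 4, p 2, p 3, p 4} = {}" using cq by (auto simp: dist)
      ultimately show "Y \<inter> {q 3, q 4, p 2, p 3, p 4} = {}" unfolding Y_def by blast
    qed
  qed
qed

end


context ladder begin

lemma no_cross:
  assumes S: "S \<subseteq> V" and tw: "tw_le (V - S) (del_edges (E - {{p 5, q 5}}) S) 2"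
    and p5: "p 5 \<notin> S" and q5: "q 5 \<notin> S"
    and left: "\<forall>k\<in>{2, 3, 4}. p k \<notin> S \<and> q k \<notin> S"
    and right: "card (S \<inter> {p 6, p 7, p 8, q 6, q 7, q 8, p 9, q 9}) \<le> 1"
    and c: "c \<in> {p 1, q 1}" "c \<notin> S" and d: "d \<in> {p 9, q 9}" "d \<notin> S"
  shows "\<not> cross (V - (p ` {1..9} \<union> q ` {1..9}) - S) E c d"
proof -
  from d(1) have "d = p 9 \<or> d = q 9" by simp
  then show ?thesis
  proof
    assume "d = p 9" then show ?thesis using no_cross_p9[OF S tw p5 q5 left right c] d(2) by simp
  next
    assume dq: "d = q 9"
    interpret sw: ladder V E q p by (rule ladder_swap[OF ladder_axioms])
    have HH: "del_edges (E - {{q 5, p 5}}) S = del_edges (E - {{p 5, q 5}}) S" by (simp add: insert_commute)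
    have st: "{q 6, q 7, q 8, p 6, p 7, p 8, q 9, p 9} = {p 6, p 7, p 8, q 6, q 7, q 8, p 9, q 9}" by blast
    have "\<not> cross (V - (q ` {1..9} \<union> p ` {1..9}) - S) E c (q 9)"
    proof (rule sw.no_cross_p9[OF S])
      show "tw_le (V - S) (del_edges (E - {{q 5, p 5}}) S) 2" using tw HH by simp
      show "q 5 \<notin> S" "p 5 \<notin> S" by (rule q5, rule p5)
      show "\<forall>k\<in>{2, 3, 4}. q k \<notin> S \<and> p k \<notin> S" using left by blast
      show "card (S \<inter> {q 6, q 7, q 8, p 6, p 7, p 8, q 9, p 9}) \<le> 1" unfolding st by (rule right)
      show "c \<in> {q 1, p 1}" using c(1) by blast
      show "c \<notin> S" by (rule c(2))
      show "q 9 \<notin> S" using d(2) dq by simp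
    qed
    then show ?thesis using dq by (simp add: Un_commute)
  qed
qed

lemma glue_remaining:
  assumes S: "S \<subseteq> V" and tw: "tw_le (V - S) (del_edges (E - {{p 5, q 5}}) S) 2"
    and p5: "p 5 \<notin> S" and q5: "q 5 \<notin> S"
    and NC: "\<forall>c\<in>{p 1, q 1} - S. \<forall>d\<in>{p 9, q 9} - S. \<not> cross (V - (p ` {1..9} \<union> q ` {1..9}) - S) E d c"
  shows "tw_le (V - S) (del_edges E S) 2"
proof -
  define L where "L = p ` {1..9} \<union> q ` {1..9}"
  define Ot where "Ot = V - L - S"
  define R where "R = {w. \<exists>d\<in>{p 9, q 9} - S. \<exists>u\<in>Ot. {d, u} \<in> E \<and> (\<lambda>a b. a \<in> Ot \<and> b \<in> Ot \<and> {a, b} \<in> E)\<^sup>*\<^sup>* u w}"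
  define LC where "LC = {p 1, q 1} - S"
  define RC where "RC = {p 9, q 9} - S"
  define Xl where "Xl = (Ot - R) \<union> LC"
  define Lr where "Lr = L - S"
  define Xr where "Xr = R \<union> RC"
  have c: "p 1 \<in> L" "q 1 \<in> L" "p 9 \<in> L" "q 9 \<in> L" "p 5 \<in> L" unfolding L_def using pL qL by auto
  have cV: "p 1 \<in> V" "q 1 \<in> V" "p 9 \<in> V" "q 9 \<in> V" using p_V q_V by auto
  have d: "p 5 \<noteq> p 1" "p 5 \<noteq> q 1" "p 5 \<noteq> p 9" "p 5 \<noteq> q 9" "p 1 \<noteq> p 9" "p 1 \<noteq> q 9" "q 1 \<noteq> p 9" "q 1 \<noteq> q 9"
    using p_eq[of 5 1] p_eq[of 5 9] p_eq[of 1 9] q_eq[of 1 9] pq_neq[of 5 1] pq_neq[of 5 9] pq_neq[of 1 9] pq_neq[of 9 1]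
    by auto
  have LV': "L \<subseteq> V" unfolding L_def using LV .
  have RO: "R \<subseteq> Ot"
  proof
    fix w assume "w \<in> R"
    then obtain u where u: "u \<in> Ot" "(\<lambda>a b. a \<in> Ot \<and> b \<in> Ot \<and> {a, b} \<in> E)\<^sup>*\<^sup>* u w"
      unfolding R_def by blast
    show "w \<in> Ot" using rt_end_in[of Ot "\<lambda>a b. {a, b} \<in> E" u w] u by simp
  qed
  have OL: "Ot \<inter> L = {}" unfolding Ot_def by blast
  have Rstep: "b \<in> R" if "a \<in> R" "b \<in> Ot" "{a, b} \<in> E" for a b
  proof -
    from that(1) obtain d u where du: "d \<in> {p 9, q 9} - S" "u \<in> Ot" "{d, u} \<in> E"
      "(\<lambda>a b. a \<in> Ot \<and> b \<in> Ot \<and> {a, b} \<in> E)\<^sup>*\<^sup>* u a" unfolding R_def by blast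
    have "a \<in> Ot" using that(1) RO by blast
    then have "(\<lambda>a b. a \<in> Ot \<and> b \<in> Ot \<and> {a, b} \<in> E)\<^sup>*\<^sup>* u b"
      using du(4) that(2,3) by (auto intro: rtranclp.rtrancl_into_rtrancl)
    then show ?thesis unfolding R_def using du(1-3) by blast
  qed
  have Rstart: "b \<in> R" if "a \<in> RC" "b \<in> Ot" "{a, b} \<in> E" for a b
    unfolding R_def using that unfolding RC_def by blast
  have Rno: False if "a \<in> LC" "b \<in> R" "{a, b} \<in> E" for a b
  proof -
    from that(2) obtain d u where du: "d \<in> {p 9, q 9} - S" "u \<in> Ot" "{d, u} \<in> E"
      "(\<lambda>a b. a \<in> Ot \<and> b \<in> Ot \<and> {a, b} \<in> E)\<^sup>*\<^sup>* u b" unfolding R_def by blast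
    have "cross Ot E d a" unfolding cross_def using du that(3) by blast
    moreover have "a \<in> {p 1, q 1} - S" using that(1) unfolding LC_def .
    ultimately show False using NC du(1) unfolding Ot_def L_def by blast
  qed
  have XlS: "Xl \<subseteq> V - S" unfolding Xl_def Ot_def LC_def using cV by blast
  have XrS: "Xr \<subseteq> V - S" unfolding Xr_def RC_def using RO cV unfolding Ot_def by blast
  have p5Xl: "p 5 \<notin> Xl" unfolding Xl_def LC_def Ot_def using c d by blast
  have p5Xr: "p 5 \<notin> Xr" unfolding Xr_def RC_def using RO OL c d by blast
  have finVS: "finite (V - S)" using finV by simp
  have tXl: "tw_le Xl {e \<in> E. e \<subseteq> Xl} 2"
    by (rule tw_restrict[OF tw finVS XlS]) (use p5Xl XlS in \<open>auto simp: del_edges_def\<close>)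
  have tXr: "tw_le Xr {e \<in> E. e \<subseteq> Xr} 2"
    by (rule tw_restrict[OF tw finVS XrS]) (use p5Xr XrS in \<open>auto simp: del_edges_def\<close>)
  have tL: "tw_le Lr {e \<in> E. e \<subseteq> Lr} 2"
  proof (rule tw_restrict[OF twL])
    show "finite (p ` {1..9} \<union> q ` {1..9})" by simp
    show "Lr \<subseteq> p ` {1..9} \<union> q ` {1..9}" unfolding Lr_def L_def by blast
    show "\<forall>e\<in>{e \<in> E. e \<subseteq> Lr}. e \<in> induced_edges E (p ` {1..9} \<union> q ` {1..9}) \<and> e \<subseteq> Lr"
      unfolding induced_edges_def Lr_def L_def by blast
  qed
  have r1: "{p 1, q 1} \<in> E" using r_edge[of 1] by simp
  have r9: "{p 9, q 9} \<in> E" using r_edge[of 9] by simp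
  have I1: "Xl \<inter> Lr \<subseteq> {p 1, q 1}" unfolding Xl_def Lr_def LC_def using OL by blast
  have G1: "tw_le (Xl \<union> Lr) ({e \<in> E. e \<subseteq> Xl} \<union> {e \<in> E. e \<subseteq> Lr}) 2"
    by (rule tw_glue[OF tXl tL I1]) (use r1 in blast)
  have LCL: "LC \<subseteq> L" "RC \<subseteq> L" unfolding LC_def RC_def using c by auto
  have I2: "(Xl \<union> Lr) \<inter> Xr \<subseteq> {p 9, q 9}"
  proof
    fix x assume x: "x \<in> (Xl \<union> Lr) \<inter> Xr"
    show "x \<in> {p 9, q 9}"
    proof (cases "x \<in> RC")
      case True then show ?thesis unfolding RC_def by blast
    next
      case False
      then have xR: "x \<in> R" using x unfolding Xr_def by blast
      then have xO: "x \<in> Ot" using RO by blast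
      then have "x \<notin> L" using OL by blast
      then have "x \<notin> Lr" "x \<notin> LC" using LCL unfolding Lr_def by auto
      moreover have "x \<notin> Ot - R" using xR by blast
      ultimately have False using x unfolding Xl_def by blast
      then show ?thesis ..
    qed
  qed
  have G2: "tw_le ((Xl \<union> Lr) \<union> Xr) (({e \<in> E. e \<subseteq> Xl} \<union> {e \<in> E. e \<subseteq> Lr}) \<union> {e \<in> E. e \<subseteq> Xr}) 2"
  proof (rule tw_glue[OF G1 tXr I2], intro impI)
    assume h: "p 9 \<in> (Xl \<union> Lr) \<inter> Xr \<and> q 9 \<in> (Xl \<union> Lr) \<inter> Xr \<and> p 9 \<noteq> q 9"
    then have "p 9 \<notin> S" "q 9 \<notin> S" using XrS by auto
    then have "{p 9, q 9} \<subseteq> Lr" unfolding Lr_def using c by auto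
    moreover have "{p 9, q 9} \<subseteq> Xr" using h by auto
    ultimately show "{p 9, q 9} \<in> {e \<in> E. e \<subseteq> Xl} \<union> {e \<in> E. e \<subseteq> Lr} \<and> {p 9, q 9} \<in> {e \<in> E. e \<subseteq> Xr}"
      using r9 by blast
  qed
  have VS: "V - S = (Xl \<union> Lr) \<union> Xr"
  proof
    show "V - S \<subseteq> (Xl \<union> Lr) \<union> Xr" unfolding Xl_def Lr_def Xr_def Ot_def by blast
    show "(Xl \<union> Lr) \<union> Xr \<subseteq> V - S" using XlS XrS LV' unfolding Lr_def by blast
  qed
  have key: "(a \<in> R \<longrightarrow> b \<in> Xr) \<and> (a \<notin> R \<longrightarrow> b \<in> Xl)"
    if kh: "a \<in> V - S" "b \<in> V - S" "{a, b} \<in> E" "a \<notin> L" for a b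
  proof -
    have aO: "a \<in> Ot" using kh unfolding Ot_def by blast
    show ?thesis
    proof (cases "b \<in> L")
      case False
      then have bO: "b \<in> Ot" using kh unfolding Ot_def by blast
      have "a \<in> R \<longrightarrow> b \<in> R" using Rstep[OF _ bO kh(3)] by blast
      moreover have "b \<in> R \<longrightarrow> a \<in> R" using Rstep[OF _ aO] kh(3) by (simp add: insert_commute)
      ultimately show ?thesis using bO unfolding Xr_def Xl_def by blast
    next
      case True
      have ba: "{b, a} \<in> E" using kh(3) by (simp add: insert_commute)
      have "b \<in> {p 1, p 9, q 1, q 9}" using nbE[of b a] True kh ba unfolding L_def by blast
      then consider "b \<in> RC" | "b \<in> LC" using kh(2) unfolding RC_def LC_def by blast
      then show ?thesis
      proof cases
        case 1
        then have "a \<in> R" using Rstart[OF 1 aO ba] by blast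
        then show ?thesis using 1 unfolding Xr_def by blast
      next
        case 2
        then have "a \<notin> R" using Rno[OF 2 _ ba] by blast
        then show ?thesis using 2 unfolding Xl_def by blast
      qed
    qed
  qed
  have E': "\<forall>e\<in>del_edges E S. e \<in> ({e \<in> E. e \<subseteq> Xl} \<union> {e \<in> E. e \<subseteq> Lr}) \<union> {e \<in> E. e \<subseteq> Xr} \<and> e \<subseteq> (Xl \<union> Lr) \<union> Xr"
  proof
    fix e assume e: "e \<in> del_edges E S"
    then have eE: "e \<in> E" and eS: "e \<inter> S = {}" unfolding del_edges_def by auto
    obtain a b where ab: "e = {a, b}" "a \<in> V" "b \<in> V" using edge2[OF eE] by blast
    have aS: "a \<in> V - S" "b \<in> V - S" using eS ab by auto
    have abE: "{a, b} \<in> E" "{b, a} \<in> E" using eE ab by (auto simp: insert_commute)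
    have "e \<subseteq> Xl \<or> e \<subseteq> Lr \<or> e \<subseteq> Xr"
    proof (cases "a \<in> L")
      case aL: True
      show ?thesis
      proof (cases "b \<in> L")
        case True then show ?thesis using aL aS ab unfolding Lr_def by blast
      next
        case False
        have k: "(b \<in> R \<longrightarrow> a \<in> Xr) \<and> (b \<notin> R \<longrightarrow> a \<in> Xl)" using key[OF aS(2) aS(1) abE(2) False] .
        have "b \<in> Ot" using False aS unfolding Ot_def by blast
        then show ?thesis using k ab unfolding Xr_def Xl_def by blast
      qed
    next
      case False
      have k: "(a \<in> R \<longrightarrow> b \<in> Xr) \<and> (a \<notin> R \<longrightarrow> b \<in> Xl)" using key[OF aS(1) aS(2) abE(1) False] .
      have "a \<in> Ot" using False aS unfolding Ot_def by blast
      then show ?thesis using k ab unfolding Xr_def Xl_def by blast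
    qed
    then show "e \<in> ({e \<in> E. e \<subseteq> Xl} \<union> {e \<in> E. e \<subseteq> Lr}) \<union> {e \<in> E. e \<subseteq> Xr} \<and> e \<subseteq> (Xl \<union> Lr) \<union> Xr"
      using eE by blast
  qed
  have fin: "finite ((Xl \<union> Lr) \<union> Xr)" using finVS unfolding VS .
  show ?thesis unfolding VS by (rule tw_restrict[OF G2 fin _ E']) simp
qed

end


context ladder begin

lemma card_sub_le: "finite S \<Longrightarrow> S \<inter> X \<subseteq> (S \<inter> Y) \<union> (S \<inter> Z) \<Longrightarrow> card (S \<inter> X) \<le> card (S \<inter> Y) + card (S \<inter> Z)"
  by (meson card_Un_le card_mono finite_Int finite_UnI le_trans)

lemma main_back:
  assumes "has_solution V (E - {{p 5, q 5}}) t"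
  shows "has_solution V E t"
proof -
  obtain S where S: "S \<subseteq> V" "card S \<le> t" and tw: "tw_le (V - S) (del_edges (E - {{p 5, q 5}}) S) 2"
    using assms unfolding has_solution_def is_solution_def by blast
  show ?thesis
  proof (cases "p 5 \<in> S \<or> q 5 \<in> S")
    case True
    have "del_edges E S = del_edges (E - {{p 5, q 5}}) S" using True unfolding del_edges_def by auto
    then show ?thesis using S tw unfolding has_solution_def is_solution_def by auto
  next
    case False
    then have p5: "p 5 \<notin> S" and q5: "q 5 \<notin> S" by auto
    define L where "L = p ` {1..9} \<union> q ` {1..9}"
    define M where "M = L - {p 1, q 1, p 9, q 9}"
    define l where "l = card (S \<inter> {p 1, q 1})"
    define r where "r = card (S \<inter> {p 9, q 9})"
    define m where "m = card (S \<inter> M)"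
    have finS: "finite S" using S(1) finV finite_subset by blast
    have cL: "{p 1, q 1, p 9, q 9} \<subseteq> L" unfolding L_def using pL qL by auto
    have d: "p 1 \<noteq> p 9" "p 1 \<noteq> q 9" "q 1 \<noteq> p 9" "q 1 \<noteq> q 9"
      using p_eq[of 1 9] q_eq[of 1 9] pq_neq[of 1 9] pq_neq[of 9 1] by auto
    have cardS: "card S = card (S - L) + l + r + m"
    proof -
      have "S = (S - L) \<union> (S \<inter> L)" by blast
      then have c1: "card S = card (S - L) + card (S \<inter> L)"
        using finS card_Un_disjoint[of "S - L" "S \<inter> L"] by (metis Diff_disjoint Int_Diff_disjoint finite_Diff finite_Int inf_commute)
      have SL: "S \<inter> L = ((S \<inter> {p 1, q 1}) \<union> (S \<inter> {p 9, q 9})) \<union> (S \<inter> M)" unfolding M_def using cL by blast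
      have "card (((S \<inter> {p 1, q 1}) \<union> (S \<inter> {p 9, q 9})) \<union> (S \<inter> M)) =
            card ((S \<inter> {p 1, q 1}) \<union> (S \<inter> {p 9, q 9})) + card (S \<inter> M)"
        by (rule card_Un_disjoint) (use finS in \<open>auto simp: M_def\<close>)
      also have "card ((S \<inter> {p 1, q 1}) \<union> (S \<inter> {p 9, q 9})) = l + r"
        unfolding l_def r_def by (rule card_Un_disjoint) (use finS d in auto)
      finally show ?thesis using c1 SL unfolding m_def by simp
    qed
    have Mp: "\<And>k. k \<in> {2..8} \<Longrightarrow> p k \<in> M" "\<And>k. k \<in> {2..8} \<Longrightarrow> q k \<in> M"
    proof -
      fix k :: nat assume k: "k \<in> {2..8}"
      then have k9: "k \<in> {1..9}" by auto
      have "p k \<noteq> p 1" "p k \<noteq> p 9" "p k \<noteq> q 1" "p k \<noteq> q 9" using k p_eq[of k 1] p_eq[of k 9] pq_neq[of k 1] pq_neq[of k 9] by auto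
      then show "p k \<in> M" unfolding M_def L_def using k9 by auto
      have "q k \<noteq> p 1" "q k \<noteq> p 9" "q k \<noteq> q 1" "q k \<noteq> q 9" using k q_eq[of k 1] q_eq[of k 9] pq_neq[of 1 k] pq_neq[of 9 k] by auto
      then show "q k \<in> M" unfolding M_def L_def using k9 by auto
    qed
    consider (CL) "l + m \<ge> 2" | (CR) "r + m \<ge> 2" | (CN) "l + m \<le> 1" "r + m \<le> 1" by linarith
    then show ?thesis
    proof cases
      case CL
      define S' where "S' = (S - L) \<union> {p 1, q 1} \<union> (S \<inter> {p 9, q 9})"
      have "card S' \<le> card (S - L) + card {p 1, q 1} + r"
        unfolding S'_def r_def by (meson add_le_mono card_Un_le le_trans order_refl)
      moreover have "card {p 1, q 1} \<le> 2" by (simp add: card_insert_if)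
      ultimately have "card S' \<le> t" using cardS CL S(2) by linarith
      moreover have "S' \<subseteq> V" unfolding S'_def using S(1) p_V q_V by auto
      moreover have "tw_le (V - S') (del_edges E S') 2" using cut_left[OF S(1) tw] unfolding S'_def L_def .
      ultimately show ?thesis unfolding has_solution_def is_solution_def by blast
    next
      case CR
      interpret rv: ladder V E "\<lambda>i. p (10 - i)" "\<lambda>i. q (10 - i)" by (rule ladder_rev[OF ladder_axioms])
      define S' where "S' = (S - L) \<union> {p 9, q 9} \<union> (S \<inter> {p 1, q 1})"
      have "card S' \<le> card (S - L) + card {p 9, q 9} + l"
        unfolding S'_def l_def by (meson add_le_mono card_Un_le le_trans order_refl)
      moreover have "card {p 9, q 9} \<le> 2" by (simp add: card_insert_if)
      ultimately have "card S' \<le> t" using cardS CR S(2) by linarith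
      moreover have "S' \<subseteq> V" unfolding S'_def using S(1) p_V q_V by auto
      moreover have "tw_le (V - S') (del_edges E S') 2"
      proof -
        have "tw_le (V - S) (del_edges (E - {{p (10 - 5), q (10 - 5)}}) S) 2" using tw by simp
        from rv.cut_left[OF S(1) this]
        show ?thesis unfolding S'_def L_def rev_img by simp
      qed
      ultimately show ?thesis unfolding has_solution_def is_solution_def by blast
    next
      case CN
      have NC: "\<forall>c\<in>{p 1, q 1} - S. \<forall>d\<in>{p 9, q 9} - S. \<not> cross (V - (p ` {1..9} \<union> q ` {1..9}) - S) E d c"
      proof (intro ballI)
        fix c d assume c: "c \<in> {p 1, q 1} - S" and d: "d \<in> {p 9, q 9} - S"
        show "\<not> cross (V - (p ` {1..9} \<union> q ` {1..9}) - S) E d c"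
        proof (cases "S \<inter> {p 2, p 3, p 4, q 2, q 3, q 4} = {}")
          case True
          have left: "\<forall>k\<in>{2, 3, 4}. p k \<notin> S \<and> q k \<notin> S" using True by auto
          have "S \<inter> {p 6, p 7, p 8, q 6, q 7, q 8, p 9, q 9} \<subseteq> (S \<inter> M) \<union> (S \<inter> {p 9, q 9})"
            using Mp by auto
          then have "card (S \<inter> {p 6, p 7, p 8, q 6, q 7, q 8, p 9, q 9}) \<le> m + r"
            unfolding m_def r_def by (rule card_sub_le[OF finS])
          then have right: "card (S \<inter> {p 6, p 7, p 8, q 6, q 7, q 8, p 9, q 9}) \<le> 1" using CN by linarith
          have "\<not> cross (V - (p ` {1..9} \<union> q ` {1..9}) - S) E c d"
            using no_cross[OF S(1) tw p5 q5 left right] c d by blast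
          then show ?thesis using cross_sym[of "V - (p ` {1..9} \<union> q ` {1..9}) - S" E d c] by blast
        next
          case False
          then obtain x where x: "x \<in> S" "x \<in> {p 2, p 3, p 4, q 2, q 3, q 4}" by blast
          have xM: "x \<in> M" using x(2) Mp by auto
          have fM: "finite (S \<inter> M)" using finS by simp
          have "m \<ge> 1" unfolding m_def using x xM fM by (metis One_nat_def Suc_leI card_gt_0_iff IntI empty_iff)
          then have l0: "l = 0" and mm: "m \<le> 1" using CN by auto
          have rfree: "y \<notin> S" if "y \<in> {p 6, p 7, p 8, q 6, q 7, q 8}" for y
          proof
            assume yS: "y \<in> S"
            have yM: "y \<in> M" using that Mp by auto
            have "y \<noteq> x" using that x(2) p_eq q_eq pq_neq by auto
            then have "card {x, y} \<le> card (S \<inter> M)" using x(1) xM yS yM fM by (intro card_mono) auto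
            then show False using mm \<open>y \<noteq> x\<close> unfolding m_def by simp
          qed
          interpret rv: ladder V E "\<lambda>i. p (10 - i)" "\<lambda>i. q (10 - i)" by (rule ladder_rev[OF ladder_axioms])
          have "S \<inter> {p 4, p 3, p 2, q 4, q 3, q 2, p 1, q 1} \<subseteq> (S \<inter> M) \<union> (S \<inter> {p 1, q 1})"
            using Mp by auto
          then have "card (S \<inter> {p 4, p 3, p 2, q 4, q 3, q 2, p 1, q 1}) \<le> m + l"
            unfolding m_def l_def by (rule card_sub_le[OF finS])
          then have right': "card (S \<inter> {p 4, p 3, p 2, q 4, q 3, q 2, p 1, q 1}) \<le> 1" using CN by linarith
          have "\<not> cross (V - ((\<lambda>i. p (10 - i)) ` {1..9} \<union> (\<lambda>i. q (10 - i)) ` {1..9}) - S) E d c"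
          proof (rule rv.no_cross[OF S(1)])
            show "tw_le (V - S) (del_edges (E - {{p (10 - 5), q (10 - 5)}}) S) 2" using tw by simp
            show "p (10 - 5) \<notin> S" "q (10 - 5) \<notin> S" using p5 q5 by simp_all
            show "\<forall>k\<in>{2, 3, 4}. p (10 - k) \<notin> S \<and> q (10 - k) \<notin> S" using rfree by auto
            show "card (S \<inter> {p (10 - 6), p (10 - 7), p (10 - 8), q (10 - 6), q (10 - 7), q (10 - 8), p (10 - 9), q (10 - 9)}) \<le> 1"
              using right' by simp
            show "d \<in> {p (10 - 1), q (10 - 1)}" "d \<notin> S" using d by auto
            show "c \<in> {p (10 - 9), q (10 - 9)}" "c \<notin> S" using c by auto
          qed
          then show ?thesis unfolding rev_img .
        qed
      qed
      have "tw_le (V - S) (del_edges E S) 2" by (rule glue_remaining[OF S(1) tw p5 q5 NC])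
      then show ?thesis using S unfolding has_solution_def is_solution_def by blast
    qed
  qed
qed

end

lemma forward:
  assumes "simple_graph V E" "has_solution V E t"
  shows "has_solution V (E - {e0}) t"
proof -
  obtain S where S: "S \<subseteq> V" "card S \<le> t" and tw: "tw_le (V - S) (del_edges E S) 2"
    using assms(2) unfolding has_solution_def is_solution_def by blast
  have fin: "finite (V - S)" using assms(1) unfolding simple_graph_def by blast
  have E': "\<forall>e\<in>del_edges (E - {e0}) S. e \<in> del_edges E S \<and> e \<subseteq> V - S"
  proof
    fix e assume e: "e \<in> del_edges (E - {e0}) S"
    then have "e \<in> E" "e \<inter> S = {}" unfolding del_edges_def by auto
    moreover have "\<exists>u v. e = {u, v} \<and> u \<noteq> v \<and> u \<in> V \<and> v \<in> V"
      using \<open>e \<in> E\<close> assms(1) unfolding simple_graph_def by blast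
    then have "e \<subseteq> V" by auto
    ultimately show "e \<in> del_edges E S \<and> e \<subseteq> V - S" unfolding del_edges_def by auto
  qed
  have "tw_le (V - S) (del_edges (E - {e0}) S) 2"
    by (rule tw_restrict[OF tw fin order_refl E'])
  then show ?thesis using S unfolding has_solution_def is_solution_def by blast
qed

theorem mainTheorem14:
  fixes V :: "'a set" and E :: "'a set set" and t :: nat and p q :: "nat \<Rightarrow> 'a"
  assumes "simple_graph V E"
    and "induced_path V E p 9"
    and "induced_path V E q 9"
    and "p ` {1..9} \<inter> q ` {1..9} = {}"
    and "\<forall>i\<in>{1..9}. {p i, q i} \<in> E"
    and "tw_le (p ` {1..9} \<union> q ` {1..9}) (induced_edges E (p ` {1..9} \<union> q ` {1..9})) 2"
    and "\<forall>v \<in> p ` {1..9} \<union> q ` {1..9}.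
           (\<exists>w \<in> V - (p ` {1..9} \<union> q ` {1..9}). {v, w} \<in> E) \<longrightarrow> v \<in> {p 1, p 9, q 1, q 9}"
  shows "has_solution V E t \<longleftrightarrow> has_solution V (E - {{p 5, q 5}}) t"
proof -
  interpret ladder V E p q using assms by (rule ladder.intro)
  show ?thesis using forward[OF assms(1), of t "{p 5, q 5}"] main_back by blast
qed

end
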